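(* Let $M$ be a timelike surface in $\mathbb{R}^{n,1}$ with a canonical null direction with respect to a constant unit spacelike vector $Z$, and let $W$ and $a$ be as below. Then $$\Delta a=-2Ka-2\,W(K),$$ where $K$ is the Gaussian curvature of $M$. In particular, if $K\equiv0$ then $a$ is harmonic.
   Context: $\mathbb{R}^{n,1}$ is $\mathbb{R}^{n+1}$ with the metric $-dx_1^2+dx_2^2+\dots+dx_{n+1}^2$. A surface is timelike if the induced metric has signature $(1,1)$; a vector $v$ is lightlike if $v\ne0$ and $\langle v,v\rangle=0$. For a constant vector $Z$, $Z=Z^\top+Z^\perp$ along $M$; $M$ has a canonical null direction with respect to $Z$ if $Z^\top$ is lightlike everywhere on $M$. $W$ is the unique lightlike tangent field with $\langle Z^\top,W\rangle=-1$, and $a:=\langle II(W,W),Z^\perp\rangle$ with $II$ the second fundamental form. $\Delta$ is the trace of the Hessian with respect to the induced Lorentzian metric. *)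

theory Defs
  imports "HOL-Analysis.Analysis"
begin

text \<open>Minkowski space R^{n,1} is modelled as real \<times> real^'n: the first component is the
  time coordinate x_1, the second component holds x_2, ..., x_{n+1}.
  A (piece of a) surface is given by a local parametrisation X defined on an open set
  U of the (u_0,u_1)-plane real \<times> real.\<close>

type_synonym 'n mink = "real \<times> (real ^ 'n)"

definition lor :: "'n::finite mink \<Rightarrow> 'n mink \<Rightarrow> real" where
  "lor x y = - fst x * fst y + snd x \<bullet> snd y"

definition lightlike :: "'n::finite mink \<Rightarrow> bool" where
  "lightlike v \<longleftrightarrow> v \<noteq> 0 \<and> lor v v = 0"

definition cbasis :: "nat \<Rightarrow> real \<times> real" where
  "cbasis i = (if i = 0 then (1, 0) else (0, 1))"

definition pd :: "nat \<Rightarrow> (real \<times> real \<Rightarrow> 'b::real_normed_vector) \<Rightarrow> real \<times> real \<Rightarrow> 'b" where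
  "pd i f p = frechet_derivative f (at p) (cbasis i)"

fun Ck :: "nat \<Rightarrow> (real \<times> real) set \<Rightarrow> (real \<times> real \<Rightarrow> 'b::real_normed_vector) \<Rightarrow> bool" where
  "Ck 0 U f = continuous_on U f"
| "Ck (Suc k) U f = (f differentiable_on U \<and> (\<forall>i<2. Ck k U (pd i f)))"

definition Cinf_on :: "(real \<times> real) set \<Rightarrow> (real \<times> real \<Rightarrow> 'b::real_normed_vector) \<Rightarrow> bool" where
  "Cinf_on U f \<longleftrightarrow> (\<forall>k. Ck k U f)"

definition gm :: "(real \<times> real \<Rightarrow> 'n::finite mink) \<Rightarrow> nat \<Rightarrow> nat \<Rightarrow> real \<times> real \<Rightarrow> real" where
  "gm X i j p = lor (pd i X p) (pd j X p)"

definition detg :: "(real \<times> real \<Rightarrow> 'n::finite mink) \<Rightarrow> real \<times> real \<Rightarrow> real" where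
  "detg X p = gm X 0 0 p * gm X 1 1 p - gm X 0 1 p * gm X 1 0 p"

definition ginv :: "(real \<times> real \<Rightarrow> 'n::finite mink) \<Rightarrow> nat \<Rightarrow> nat \<Rightarrow> real \<times> real \<Rightarrow> real" where
  "ginv X i j p =
     (if i = 0 \<and> j = 0 then gm X 1 1 p
      else if i = 1 \<and> j = 1 then gm X 0 0 p
      else - gm X i j p) / detg X p"

text \<open>Timelike: the induced metric has signature (1,1); for a 2x2 symmetric matrix this
  means negative determinant (in particular X is an immersion).\<close>
definition timelike_surface :: "(real \<times> real) set \<Rightarrow> (real \<times> real \<Rightarrow> 'n::finite mink) \<Rightarrow> bool" where
  "timelike_surface U X \<longleftrightarrow> open U \<and> Cinf_on U X \<and> (\<forall>p\<in>U. detg X p < 0)"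

definition tanp :: "(real \<times> real \<Rightarrow> 'n::finite mink) \<Rightarrow> 'n mink \<Rightarrow> real \<times> real \<Rightarrow> 'n mink" where
  "tanp X v p = (\<Sum>i<2. \<Sum>j<2. (ginv X i j p * lor v (pd j X p)) *\<^sub>R pd i X p)"

definition norp :: "(real \<times> real \<Rightarrow> 'n::finite mink) \<Rightarrow> 'n mink \<Rightarrow> real \<times> real \<Rightarrow> 'n mink" where
  "norp X v p = v - tanp X v p"

definition chr :: "(real \<times> real \<Rightarrow> 'n::finite mink) \<Rightarrow> nat \<Rightarrow> nat \<Rightarrow> nat \<Rightarrow> real \<times> real \<Rightarrow> real" where
  "chr X k i j p = 1/2 * (\<Sum>l<2. ginv X k l p *
      (pd i (gm X j l) p + pd j (gm X i l) p - pd l (gm X i j) p))"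

text \<open>Gaussian curvature K = <R(d0,d1)d1, d0> / (g00 g11 - g01^2), with
  R(A,B) = nabla_A nabla_B - nabla_B nabla_A - nabla_[A,B].\<close>
definition gauss_curv :: "(real \<times> real \<Rightarrow> 'n::finite mink) \<Rightarrow> real \<times> real \<Rightarrow> real" where
  "gauss_curv X p =
     (\<Sum>l<2. (pd 0 (chr X l 1 1) p - pd 1 (chr X l 0 1) p
              + (\<Sum>k<2. chr X k 1 1 p * chr X l 0 k p - chr X k 0 1 p * chr X l 1 k p))
            * gm X l 0 p) / detg X p"

definition lap :: "(real \<times> real \<Rightarrow> 'n::finite mink) \<Rightarrow> (real \<times> real \<Rightarrow> real) \<Rightarrow> real \<times> real \<Rightarrow> real" where
  "lap X f p = (\<Sum>i<2. \<Sum>j<2. ginv X i j p *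
       (pd i (pd j f) p - (\<Sum>k<2. chr X k i j p * pd k f p)))"

definition sff :: "(real \<times> real \<Rightarrow> 'n::finite mink) \<Rightarrow> nat \<Rightarrow> nat \<Rightarrow> real \<times> real \<Rightarrow> 'n mink" where
  "sff X i j p = norp X (pd i (pd j X) p) p"

definition Ztop :: "(real \<times> real \<Rightarrow> 'n::finite mink) \<Rightarrow> 'n mink \<Rightarrow> real \<times> real \<Rightarrow> 'n mink" where
  "Ztop X Z p = tanp X Z p"

definition Zperp :: "(real \<times> real \<Rightarrow> 'n::finite mink) \<Rightarrow> 'n mink \<Rightarrow> real \<times> real \<Rightarrow> 'n mink" where
  "Zperp X Z p = norp X Z p"

definition canonical_null_direction ::
  "(real \<times> real) set \<Rightarrow> (real \<times> real \<Rightarrow> 'n::finite mink) \<Rightarrow> 'n mink \<Rightarrow> bool" where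
  "canonical_null_direction U X Z \<longleftrightarrow> (\<forall>p\<in>U. lightlike (Ztop X Z p))"

text \<open>W: the unique lightlike tangent vector with <Z^T, W> = -1.\<close>
definition Wfield :: "(real \<times> real \<Rightarrow> 'n::finite mink) \<Rightarrow> 'n mink \<Rightarrow> real \<times> real \<Rightarrow> 'n mink" where
  "Wfield X Z p = (THE w. w \<in> span {pd 0 X p, pd 1 X p} \<and> lightlike w \<and> lor (Ztop X Z p) w = -1)"

text \<open>Coordinate components W = W^0 d_0 X + W^1 d_1 X.\<close>
definition Wcoef :: "(real \<times> real \<Rightarrow> 'n::finite mink) \<Rightarrow> 'n mink \<Rightarrow> nat \<Rightarrow> real \<times> real \<Rightarrow> real" where
  "Wcoef X Z i p = (\<Sum>j<2. ginv X i j p * lor (Wfield X Z p) (pd j X p))"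

definition acoef :: "(real \<times> real \<Rightarrow> 'n::finite mink) \<Rightarrow> 'n mink \<Rightarrow> real \<times> real \<Rightarrow> real" where
  "acoef X Z p = lor (\<Sum>i<2. \<Sum>j<2. (Wcoef X Z i p * Wcoef X Z j p) *\<^sub>R sff X i j p) (Zperp X Z p)"

definition Wderiv :: "(real \<times> real \<Rightarrow> 'n::finite mink) \<Rightarrow> 'n mink \<Rightarrow> (real \<times> real \<Rightarrow> real) \<Rightarrow> real \<times> real \<Rightarrow> real" where
  "Wderiv X Z f p = (\<Sum>i<2. Wcoef X Z i p * pd i f p)"

end

theory Submission
  imports Defs
begin

lemma pd_eq: "(f has_derivative f') (at p) \<Longrightarrow> pd i f p = f' (cbasis i)"
  unfolding pd_def by (metis frechet_derivative_at)

lemma pd_cong: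
  assumes "open U" "p \<in> U" "\<And>q. q \<in> U \<Longrightarrow> f q = g q"
  shows "pd i f p = pd i g p"
proof -
  have "\<And>D. (f has_derivative D) (at p) \<longleftrightarrow> (g has_derivative D) (at p)"
  proof
    fix D assume "(f has_derivative D) (at p)"
    then show "(g has_derivative D) (at p)" using has_derivative_transform_within_open[OF _ assms(1,2)] assms(3) by blast
  next
    fix D assume "(g has_derivative D) (at p)"
    then show "(f has_derivative D) (at p)" using has_derivative_transform_within_open[OF _ assms(1,2)] assms(3) by metis
  qed
  then have "(\<lambda>D. (f has_derivative D) (at p)) = (\<lambda>D. (g has_derivative D) (at p))" by (rule ext)
  then have "frechet_derivative f (at p) = frechet_derivative g (at p)"
    unfolding frechet_derivative_def by (rule arg_cong[where f=Eps])
  then show ?thesis unfolding pd_def by simp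
qed

lemma diff_cong:
  assumes "open U" "p \<in> U" "\<And>q. q \<in> U \<Longrightarrow> f q = g q" "f differentiable (at p)"
  shows "g differentiable (at p)"
proof -
  obtain D where "(f has_derivative D) (at p)" using assms(4) unfolding differentiable_def by blast
  then have "(g has_derivative D) (at p)"
    by (rule has_derivative_transform_within_open[OF _ assms(1,2)]) (simp add: assms)
  then show ?thesis unfolding differentiable_def by blast
qed

lemma cbasis_ne0: "i \<noteq> 0 \<Longrightarrow> cbasis i = cbasis 1"
  by (simp add: cbasis_def)

lemma pd_ne0: "i \<noteq> 0 \<Longrightarrow> pd i f = pd 1 f"
  unfolding pd_def fun_eq_iff using cbasis_ne0 by metis

lemma Ck_Suc_D: "open U \<Longrightarrow> Ck (Suc k) U f \<Longrightarrow> Ck k U f"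
proof (induction k arbitrary: f)
  case 0 then show ?case by (simp add: differentiable_imp_continuous_on)
next
  case (Suc k) then show ?case by simp
qed

lemma Ck_diff_at: "open U \<Longrightarrow> Ck (Suc k) U f \<Longrightarrow> p \<in> U \<Longrightarrow> f differentiable (at p)"
  by (simp add: differentiable_on_eq_differentiable_at)

lemma Ck_pd: "Ck (Suc k) U f \<Longrightarrow> Ck k U (pd i f)"
proof (cases "i = 0")
  case False
  assume "Ck (Suc k) U f"
  then have "Ck k U (pd 1 f)" by simp
  then show ?thesis using pd_ne0[OF False, of f] by simp
qed simp

lemma Ck_cong:
  fixes f g :: "real \<times> real \<Rightarrow> 'b::real_normed_vector"
  assumes "open U"
  shows "Ck k U f \<Longrightarrow> (\<And>q. q \<in> U \<Longrightarrow> f q = g q) \<Longrightarrow> Ck k U g"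
proof (induction k arbitrary: f g)
  case 0 
  have "continuous_on U f" using 0 by simp
  then show ?case using continuous_on_cong[of U U f g] 0 by simp
next
  case (Suc k)
  have "g differentiable (at p)" if "p \<in> U" for p
    using diff_cong[OF assms that] Suc.prems Ck_diff_at[OF assms Suc.prems(1) that] by blast
  then have d: "g differentiable_on U" by (simp add: differentiable_on_eq_differentiable_at[OF assms])
  have "Ck k U (pd i g)" if "i < 2" for i
  proof -
    have "Ck k U (pd i f)" using Suc.prems that by simp
    moreover have "\<And>q. q \<in> U \<Longrightarrow> pd i f q = pd i g q" using pd_cong[OF assms] Suc.prems(2) by blast
    ultimately show ?thesis using Suc.IH by blast
  qed
  then show ?case using d by simp
qed

lemma Ck_const: "Ck k U (\<lambda>q. c)"
proof (induction k arbitrary: c)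
  case 0 then show ?case by simp
next
  case (Suc k)
  have "pd i (\<lambda>q. c) = (\<lambda>q. 0)" for i by (simp add: pd_def fun_eq_iff)
  then show ?case using Suc by simp
qed

lemma pd_add:
  fixes f g :: "real \<times> real \<Rightarrow> 'b::real_normed_vector"
  assumes "f differentiable (at p)" "g differentiable (at p)"
  shows "pd i (\<lambda>q. f q + g q) p = pd i f p + pd i g p"
proof -
  obtain f' g' where f': "(f has_derivative f') (at p)" and g': "(g has_derivative g') (at p)"
    using assms unfolding differentiable_def by blast
  show ?thesis using pd_eq[OF has_derivative_add[OF f' g']] pd_eq[OF f'] pd_eq[OF g'] by simp
qed

lemma diff_add:
  fixes f g :: "real \<times> real \<Rightarrow> 'b::real_normed_vector"
  assumes "f differentiable (at p)" "g differentiable (at p)"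
  shows "(\<lambda>q. f q + g q) differentiable (at p)"
  using assms by (rule differentiable_add)

lemma pd_bil:
  assumes "bounded_bilinear B" "f differentiable (at p)" "g differentiable (at p)"
  shows "pd i (\<lambda>q. B (f q) (g q)) p = B (f p) (pd i g p) + B (pd i f p) (g p)"
proof -
  obtain f' g' where f': "(f has_derivative f') (at p)" and g': "(g has_derivative g') (at p)"
    using assms unfolding differentiable_def by blast
  show ?thesis using bounded_bilinear.FDERIV[OF assms(1) f' g'] f' g' by (simp add: pd_eq)
qed

lemma diff_bil:
  assumes "bounded_bilinear B" "f differentiable (at p)" "g differentiable (at p)"
  shows "(\<lambda>q. B (f q) (g q)) differentiable (at p)"
proof -
  obtain f' g' where f': "(f has_derivative f') (at p)" and g': "(g has_derivative g') (at p)"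
    using assms unfolding differentiable_def by blast
  show ?thesis using bounded_bilinear.FDERIV[OF assms(1) f' g'] unfolding differentiable_def by blast
qed

lemma Ck_add:
  fixes f g :: "real \<times> real \<Rightarrow> 'b::real_normed_vector"
  assumes "open U"
  shows "Ck k U f \<Longrightarrow> Ck k U g \<Longrightarrow> Ck k U (\<lambda>q. f q + g q)"
proof (induction k arbitrary: f g)
  case 0 then show ?case by (simp add: continuous_on_add)
next
  case (Suc k)
  have "Ck k U (pd i (\<lambda>q. f q + g q))" if "i < 2" for i
  proof -
    have "Ck k U (\<lambda>q. pd i f q + pd i g q)" using Suc.IH Suc.prems that by simp
    moreover have "pd i f q + pd i g q = pd i (\<lambda>q. f q + g q) q" if "q \<in> U" for q
      using pd_add[OF Ck_diff_at[OF assms Suc.prems(1) that] Ck_diff_at[OF assms Suc.prems(2) that]] by simp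
    ultimately show ?thesis by (rule Ck_cong[OF assms])
  qed
  then show ?case using Suc.prems by (simp add: differentiable_on_add)
qed

lemma Ck_bil:
  assumes "open U" "bounded_bilinear B"
  shows "Ck k U f \<Longrightarrow> Ck k U g \<Longrightarrow> Ck k U (\<lambda>q. B (f q) (g q))"
proof (induction k arbitrary: f g)
  case 0 then show ?case using bounded_bilinear.continuous_on[OF assms(2)] by simp
next
  case (Suc k)
  have "Ck k U (pd i (\<lambda>q. B (f q) (g q)))" if "i < 2" for i
  proof -
    have "Ck k U (\<lambda>q. B (f q) (pd i g q))" using Suc.IH[of f "pd i g"] Suc.prems that Ck_Suc_D[OF assms(1) Suc.prems(1)] by simp
    moreover have "Ck k U (\<lambda>q. B (pd i f q) (g q))" using Suc.IH[of "pd i f" g] Suc.prems that Ck_Suc_D[OF assms(1) Suc.prems(2)] by simp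
    ultimately have "Ck k U (\<lambda>q. B (f q) (pd i g q) + B (pd i f q) (g q))" by (rule Ck_add[OF assms(1)])
    moreover have "B (f q) (pd i g q) + B (pd i f q) (g q) = pd i (\<lambda>q. B (f q) (g q)) q" if "q \<in> U" for q
      using pd_bil[OF assms(2) Ck_diff_at[OF assms(1) Suc.prems(1) that] Ck_diff_at[OF assms(1) Suc.prems(2) that]] by simp
    ultimately show ?thesis by (rule Ck_cong[OF assms(1)])
  qed
  moreover have "(\<lambda>q. B (f q) (g q)) differentiable_on U"
    unfolding differentiable_on_eq_differentiable_at[OF assms(1)]
    using diff_bil[OF assms(2)] Ck_diff_at[OF assms(1) Suc.prems(1)] Ck_diff_at[OF assms(1) Suc.prems(2)] by blast
  ultimately show ?case by simp
qed

lemma pd_inverse: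
  fixes f :: "real \<times> real \<Rightarrow> real"
  assumes "f differentiable (at p)" "f p \<noteq> 0"
  shows "pd i (\<lambda>q. inverse (f q)) p = - (pd i f p * inverse (f p) * inverse (f p))"
proof -
  obtain f' where f': "(f has_derivative f') (at p)" using assms unfolding differentiable_def by blast
  show ?thesis using Deriv.has_derivative_inverse[OF assms(2) f'] f' by (simp add: pd_eq)
qed

lemma diff_inverse:
  fixes f :: "real \<times> real \<Rightarrow> real"
  assumes "f differentiable (at p)" "f p \<noteq> 0"
  shows "(\<lambda>q. inverse (f q)) differentiable (at p)"
proof -
  obtain f' where f': "(f has_derivative f') (at p)" using assms unfolding differentiable_def by blast
  show ?thesis using Deriv.has_derivative_inverse[OF assms(2) f'] unfolding differentiable_def by blast
qed

lemma Ck_inverse: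
  fixes f :: "real \<times> real \<Rightarrow> real"
  assumes "open U" "\<And>q. q \<in> U \<Longrightarrow> f q \<noteq> 0"
  shows "Ck k U f \<Longrightarrow> Ck k U (\<lambda>q. inverse (f q))"
proof (induction k)
  case 0
  have "continuous_on U f" using 0 by simp
  then show ?case using assms(2) by (auto intro!: continuous_on_inverse)
next
  case (Suc k)
  have ik: "Ck k U (\<lambda>q. inverse (f q))" by (rule Suc.IH[OF Ck_Suc_D[OF assms(1) Suc.prems]])
  have M: "Ck k U a \<Longrightarrow> Ck k U b \<Longrightarrow> Ck k U (\<lambda>q. a q * b q)" for a b :: "real\<times>real \<Rightarrow> real"
    using Ck_bil[OF assms(1) bounded_bilinear_mult] by blast
  have "Ck k U (pd i (\<lambda>q. inverse (f q)))" if "i < 2" for i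
  proof -
    have "Ck k U (\<lambda>q. (-1) * (pd i f q * inverse (f q) * inverse (f q)))"
      using M[OF Ck_const[of k U "-1"] M[OF M[OF Ck_pd[OF Suc.prems, of i] ik] ik]] by simp
    moreover have "(-1) * (pd i f q * inverse (f q) * inverse (f q)) = pd i (\<lambda>q. inverse (f q)) q" if "q \<in> U" for q
      using pd_inverse[OF Ck_diff_at[OF assms(1) Suc.prems that] assms(2)[OF that]] by simp
    ultimately show ?thesis by (rule Ck_cong[OF assms(1)])
  qed
  moreover have "(\<lambda>q. inverse (f q)) differentiable_on U"
    unfolding differentiable_on_eq_differentiable_at[OF assms(1)]
    using diff_inverse[OF Ck_diff_at[OF assms(1) Suc.prems] assms(2)] by blast
  ultimately show ?case by simp
qed


lemma line_deriv:
  fixes f :: "real \<times> real \<Rightarrow> real"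
  assumes "f differentiable (at (q + s *\<^sub>R cbasis i))"
  shows "((\<lambda>s. f (q + s *\<^sub>R cbasis i)) has_real_derivative pd i f (q + s *\<^sub>R cbasis i)) (at s)"
proof -
  obtain D where D: "(f has_derivative D) (at (q + s *\<^sub>R cbasis i))"
    using assms unfolding differentiable_def by blast
  have l: "((\<lambda>s. q + s *\<^sub>R cbasis i) has_derivative (\<lambda>h. h *\<^sub>R cbasis i)) (at s)"
    by (auto intro!: derivative_eq_intros)
  have "((\<lambda>s. f (q + s *\<^sub>R cbasis i)) has_derivative (\<lambda>h. D (h *\<^sub>R cbasis i))) (at s)"
    using has_derivative_compose[OF l D] by (simp add: o_def)
  moreover have "(\<lambda>h. D (h *\<^sub>R cbasis i)) = (\<lambda>h. D (cbasis i) * h)"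
    using linear.scaleR[OF bounded_linear.linear[OF has_derivative_bounded_linear[OF D]]]
    by (simp add: fun_eq_iff mult.commute)
  ultimately show ?thesis using pd_eq[OF D] by (simp add: has_field_derivative_def)
qed

lemma mvt_dir:
  fixes F :: "real \<times> real \<Rightarrow> real"
  assumes "0 < h" "\<And>s. 0 \<le> s \<Longrightarrow> s \<le> h \<Longrightarrow> F differentiable (at (q + s *\<^sub>R cbasis i))"
  shows "\<exists>\<xi>. 0 < \<xi> \<and> \<xi> < h \<and> F (q + h *\<^sub>R cbasis i) - F q = h * pd i F (q + \<xi> *\<^sub>R cbasis i)"
proof -
  have "\<exists>z. 0 < z \<and> z < h \<and> F (q + h *\<^sub>R cbasis i) - F (q + 0 *\<^sub>R cbasis i) = (h - 0) * pd i F (q + z *\<^sub>R cbasis i)"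
    by (rule MVT2[OF assms(1)]) (rule line_deriv, rule assms(2), auto)
  then show ?thesis by simp
qed

lemma pd_shift:
  fixes f :: "real \<times> real \<Rightarrow> 'b::real_normed_vector"
  assumes "f differentiable (at (y + c))"
  shows "pd i (\<lambda>x. f (x + c)) y = pd i f (y + c)" and "(\<lambda>x. f (x + c)) differentiable (at y)"
proof -
  obtain D where D: "(f has_derivative D) (at (y + c))"
    using assms unfolding differentiable_def by blast
  have l: "((\<lambda>x. x + c) has_derivative (\<lambda>h. h)) (at y)"
    by (auto intro!: derivative_eq_intros)
  have *: "((\<lambda>x. f (x + c)) has_derivative D) (at y)"
    using has_derivative_compose[OF l D] by (simp add: o_def)
  show "pd i (\<lambda>x. f (x + c)) y = pd i f (y + c)" using pd_eq[OF *] pd_eq[OF D] by simp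
  show "(\<lambda>x. f (x + c)) differentiable (at y)" using * unfolding differentiable_def by blast
qed

lemma cb0: "s *\<^sub>R cbasis 0 = (s, 0)" and cb1: "s *\<^sub>R cbasis 1 = (0, s)"
  by (simp_all add: cbasis_def)

lemma pd_diff_shift:
  fixes f :: "real \<times> real \<Rightarrow> real"
  assumes "f differentiable (at (y + c))" "f differentiable (at y)"
  shows "pd i (\<lambda>x. f (x + c) - f x) y = pd i f (y + c) - pd i f y"
    and "(\<lambda>x. f (x + c) - f x) differentiable (at y)"
proof -
  obtain D where D: "(f has_derivative D) (at (y + c))"
    using assms unfolding differentiable_def by blast
  obtain E where E: "(f has_derivative E) (at y)"
    using assms unfolding differentiable_def by blast
  have l: "((\<lambda>x. x + c) has_derivative (\<lambda>h. h)) (at y)"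
    by (auto intro!: derivative_eq_intros)
  have *: "((\<lambda>x. f (x + c)) has_derivative D) (at y)"
    using has_derivative_compose[OF l D] by (simp add: o_def)
  have **: "((\<lambda>x. f (x + c) - f x) has_derivative (\<lambda>h. D h - E h)) (at y)"
    by (rule has_derivative_diff[OF * E])
  show "pd i (\<lambda>x. f (x + c) - f x) y = pd i f (y + c) - pd i f y"
    using pd_eq[OF **] pd_eq[OF D] pd_eq[OF E] by simp
  show "(\<lambda>x. f (x + c) - f x) differentiable (at y)" using ** unfolding differentiable_def by blast
qed

lemma schwarz_square:
  fixes f :: "real \<times> real \<Rightarrow> real"
  assumes h: "0 < h"
    and sq: "\<And>s t. 0 \<le> s \<Longrightarrow> s \<le> h \<Longrightarrow> 0 \<le> t \<Longrightarrow> t \<le> h \<Longrightarrow>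
      f differentiable (at (p + (s,t))) \<and> pd 0 f differentiable (at (p + (s,t))) \<and> pd 1 f differentiable (at (p + (s,t)))"
  shows "\<exists>s1 t1 s2 t2. 0 \<le> s1 \<and> s1 \<le> h \<and> 0 \<le> t1 \<and> t1 \<le> h \<and> 0 \<le> s2 \<and> s2 \<le> h \<and> 0 \<le> t2 \<and> t2 \<le> h \<and>
     pd 1 (pd 0 f) (p + (s1,t1)) = pd 0 (pd 1 f) (p + (s2,t2))"
proof -
  define F where "F = (\<lambda>x. f (x + (0,h)) - f x)"
  define G where "G = (\<lambda>x. f (x + (h,0)) - f x)"
  have dF: "F differentiable (at (p + s *\<^sub>R cbasis 0))" "pd 0 F (p + s *\<^sub>R cbasis 0) = pd 0 f (p + (s,0) + (0,h)) - pd 0 f (p + (s,0))"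
    if "0 \<le> s" "s \<le> h" for s
  proof -
    have a: "f differentiable (at (p + (s,0) + (0,h)))" using sq[of s h] that h by (simp add: add.assoc)
    have b: "f differentiable (at (p + (s,0)))" using sq[of s 0] that h by simp
    show "F differentiable (at (p + s *\<^sub>R cbasis 0))" "pd 0 F (p + s *\<^sub>R cbasis 0) = pd 0 f (p + (s,0) + (0,h)) - pd 0 f (p + (s,0))"
      using pd_diff_shift[OF a b] unfolding F_def cb0 by auto
  qed
  obtain \<xi> where \<xi>: "0 < \<xi>" "\<xi> < h" "F (p + h *\<^sub>R cbasis 0) - F p = h * pd 0 F (p + \<xi> *\<^sub>R cbasis 0)"
    using mvt_dir[OF h, of F p 0] dF(1) by blast
  have dd: "pd 0 f differentiable (at (p + (\<xi>,0) + s *\<^sub>R cbasis 1))" if "0 \<le> s" "s \<le> h" for s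
    using sq[of \<xi> s] \<xi> that unfolding cb1 by (simp add: add.assoc)
  obtain \<eta> where \<eta>: "0 < \<eta>" "\<eta> < h" "pd 0 f (p + (\<xi>,0) + h *\<^sub>R cbasis 1) - pd 0 f (p + (\<xi>,0)) = h * pd 1 (pd 0 f) (p + (\<xi>,0) + \<eta> *\<^sub>R cbasis 1)"
    using mvt_dir[OF h dd] by blast
  have dG: "G differentiable (at (p + s *\<^sub>R cbasis 1))" "pd 1 G (p + s *\<^sub>R cbasis 1) = pd 1 f (p + (0,s) + (h,0)) - pd 1 f (p + (0,s))"
    if "0 \<le> s" "s \<le> h" for s
  proof -
    have a: "f differentiable (at (p + (0,s) + (h,0)))" using sq[of h s] that h by (simp add: add.assoc)
    have b: "f differentiable (at (p + (0,s)))" using sq[of 0 s] that h by simp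
    show "G differentiable (at (p + s *\<^sub>R cbasis 1))" "pd 1 G (p + s *\<^sub>R cbasis 1) = pd 1 f (p + (0,s) + (h,0)) - pd 1 f (p + (0,s))"
      using pd_diff_shift[OF a b] unfolding G_def cb1 by auto
  qed
  obtain \<xi>' where \<xi>': "0 < \<xi>'" "\<xi>' < h" "G (p + h *\<^sub>R cbasis 1) - G p = h * pd 1 G (p + \<xi>' *\<^sub>R cbasis 1)"
    using mvt_dir[OF h, of G p 1] dG(1) by blast
  have dd': "pd 1 f differentiable (at (p + (0,\<xi>') + s *\<^sub>R cbasis 0))" if "0 \<le> s" "s \<le> h" for s
    using sq[of s \<xi>'] \<xi>' that unfolding cb0 by (simp add: add.assoc)
  obtain \<eta>' where \<eta>': "0 < \<eta>'" "\<eta>' < h" "pd 1 f (p + (0,\<xi>') + h *\<^sub>R cbasis 0) - pd 1 f (p + (0,\<xi>')) = h * pd 0 (pd 1 f) (p + (0,\<xi>') + \<eta>' *\<^sub>R cbasis 0)"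
    using mvt_dir[OF h dd'] by blast
  have A: "F (p + h *\<^sub>R cbasis 0) - F p = h * (h * pd 1 (pd 0 f) (p + (\<xi>,\<eta>)))"
  proof -
    have "pd 0 F (p + \<xi> *\<^sub>R cbasis 0) = h * pd 1 (pd 0 f) (p + (\<xi>,\<eta>))"
      using dF(2)[of \<xi>] \<xi> \<eta>(3)[unfolded cb1] by (simp add: add.assoc)
    then show ?thesis using \<xi>(3) by simp
  qed
  have B: "G (p + h *\<^sub>R cbasis 1) - G p = h * (h * pd 0 (pd 1 f) (p + (\<eta>',\<xi>')))"
  proof -
    have "pd 1 G (p + \<xi>' *\<^sub>R cbasis 1) = h * pd 0 (pd 1 f) (p + (\<eta>',\<xi>'))"
      using dG(2)[of \<xi>'] \<xi>' \<eta>'(3)[unfolded cb0] by (simp add: add.assoc)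
    then show ?thesis using \<xi>'(3) by simp
  qed
  have pp: "p + (h,0) + (0,h) = p + (0,h) + (h,0)" by (simp add: algebra_simps)
  have "F (p + h *\<^sub>R cbasis 0) - F p = G (p + h *\<^sub>R cbasis 1) - G p"
    unfolding F_def G_def cb0 cb1 pp by simp
  then have "h * (h * pd 1 (pd 0 f) (p + (\<xi>,\<eta>))) = h * (h * pd 0 (pd 1 f) (p + (\<eta>',\<xi>')))"
    using A B by simp
  then have "pd 1 (pd 0 f) (p + (\<xi>,\<eta>)) = pd 0 (pd 1 f) (p + (\<eta>',\<xi>'))" using h by simp
  then show ?thesis using \<xi> \<eta> \<xi>' \<eta>' by (intro exI[of _ \<xi>] exI[of _ \<eta>] exI[of _ \<eta>'] exI[of _ \<xi>']) auto
qed

lemma pd_const: "pd i (\<lambda>q. c) p = 0"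
  by (simp add: pd_def)

lemma schwarz_real:
  fixes f :: "real \<times> real \<Rightarrow> real"
  assumes U: "open U" "p \<in> U" and C: "Ck 2 U f"
  shows "pd 1 (pd 0 f) p = pd 0 (pd 1 f) p"
proof (rule ccontr)
  define D1 where "D1 = pd 1 (pd 0 f)"
  define D2 where "D2 = pd 0 (pd 1 f)"
  assume ne: "pd 1 (pd 0 f) p \<noteq> pd 0 (pd 1 f) p"
  define e where "e = \<bar>D1 p - D2 p\<bar> / 2"
  have e: "e > 0" using ne by (simp add: e_def D1_def D2_def)
  have C2: "f differentiable_on U" "pd 0 f differentiable_on U" "pd 1 f differentiable_on U"
    "continuous_on U D1" "continuous_on U D2"
    using C by (simp_all add: numeral_2_eq_2 D1_def D2_def)
  have c1: "isCont D1 p" using C2(4) U continuous_on_eq_continuous_at by blast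
  have c2: "isCont D2 p" using C2(5) U continuous_on_eq_continuous_at by blast
  obtain d1 where d1: "d1 > 0" "\<And>x. dist x p < d1 \<Longrightarrow> dist (D1 x) (D1 p) < e"
    using c1 e unfolding continuous_at_eps_delta by blast
  obtain d2 where d2: "d2 > 0" "\<And>x. dist x p < d2 \<Longrightarrow> dist (D2 x) (D2 p) < e"
    using c2 e unfolding continuous_at_eps_delta by blast
  obtain d0 where d0: "d0 > 0" "ball p d0 \<subseteq> U" using U open_contains_ball by blast
  define d where "d = min d0 (min d1 d2)"
  have d: "d > 0" "d \<le> d0" "d \<le> d1" "d \<le> d2" using d0 d1 d2 by (auto simp: d_def)
  define h where "h = d / 3"
  have h: "h > 0" using d by (simp add: h_def)
  have near: "dist (p + (s,t)) p < d" if "0 \<le> s" "s \<le> h" "0 \<le> t" "t \<le> h" for s t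
  proof -
    have "dist (p + (s,t)) p = norm (s,t)" by (simp add: dist_norm)
    also have "\<dots> \<le> norm s + norm t" by (rule norm_Pair_le)
    also have "\<dots> < d" using that d by (simp add: h_def)
    finally show ?thesis .
  qed
  have inU: "p + (s,t) \<in> U" if "0 \<le> s" "s \<le> h" "0 \<le> t" "t \<le> h" for s t
    using near[OF that] d d0 by (auto simp: dist_commute)
  have dU: "f differentiable (at q) \<and> pd 0 f differentiable (at q) \<and> pd 1 f differentiable (at q)" if "q \<in> U" for q
    using C2(1-3) that unfolding differentiable_on_eq_differentiable_at[OF U(1)] by blast
  obtain s1 t1 s2 t2 where st: "0 \<le> s1" "s1 \<le> h" "0 \<le> t1" "t1 \<le> h" "0 \<le> s2" "s2 \<le> h" "0 \<le> t2" "t2 \<le> h"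
    and eq: "D1 (p + (s1,t1)) = D2 (p + (s2,t2))"
    using schwarz_square[OF h, of f p, OF dU[OF inU]] unfolding D1_def D2_def by blast
  have "dist (D1 (p + (s1,t1))) (D1 p) < e" using d1(2) near[OF st(1-4)] d by simp
  moreover have "dist (D2 (p + (s2,t2))) (D2 p) < e" using d2(2) near[OF st(5-8)] d by simp
  ultimately have "\<bar>D1 p - D2 p\<bar> < 2 * e" using eq by (simp add: dist_real_def)
  then show False by (simp add: e_def)
qed

lemma pd_inner_const:
  fixes f :: "real \<times> real \<Rightarrow> 'b::real_inner"
  assumes "f differentiable (at p)"
  shows "pd i (\<lambda>q. f q \<bullet> b) p = pd i f p \<bullet> b"
  using pd_bil[OF bounded_bilinear_inner assms, of "\<lambda>q. b" i] by (simp add: pd_const)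

lemma schwarz01:
  fixes f :: "real \<times> real \<Rightarrow> 'b::euclidean_space"
  assumes U: "open U" "p \<in> U" and C: "Ck 2 U f"
  shows "pd 1 (pd 0 f) p = pd 0 (pd 1 f) p"
proof (rule euclidean_eqI)
  fix b :: 'b assume b: "b \<in> Basis"
  define fb where "fb = (\<lambda>q. f q \<bullet> b)"
  have Cb: "Ck 2 U fb" unfolding fb_def by (rule Ck_bil[OF U(1) bounded_bilinear_inner C Ck_const])
  have C1: "Ck (Suc 0) U (pd i f)" for i using C Ck_pd[of "Suc 0" U f i] by (simp add: numeral_2_eq_2)
  have C2: "Ck (Suc 1) U f" using C by (simp add: numeral_2_eq_2)
  have dq: "pd i f differentiable (at q)" if "q \<in> U" for i q by (rule Ck_diff_at[OF U(1) C1 that])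
  have df: "f differentiable (at q)" if "q \<in> U" for q by (rule Ck_diff_at[OF U(1) C2 that])
  have *: "pd j (pd i fb) p = pd j (pd i f) p \<bullet> b" for i j
  proof -
    have "pd j (pd i fb) p = pd j (\<lambda>q. pd i f q \<bullet> b) p"
      by (rule pd_cong[OF U]) (simp add: fb_def pd_inner_const[OF df])
    also have "\<dots> = pd j (pd i f) p \<bullet> b" by (rule pd_inner_const[OF dq[OF U(2)]])
    finally show ?thesis .
  qed
  show "pd 1 (pd 0 f) p \<bullet> b = pd 0 (pd 1 f) p \<bullet> b"
    using schwarz_real[OF U Cb] * by simp
qed

lemma schwarz:
  fixes f :: "real \<times> real \<Rightarrow> 'b::euclidean_space"
  assumes U: "open U" "p \<in> U" and C: "Ck 2 U f"
  shows "pd i (pd j f) p = pd j (pd i f) p"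
proof -
  have S: "pd 1 (pd 0 f) p = pd 0 (pd 1 f) p" by (rule schwarz01[OF U C])
  have "i = 0 \<or> pd i = pd 1" using pd_ne0 by (auto simp: fun_eq_iff)
  moreover have "j = 0 \<or> pd j = pd 1" using pd_ne0 by (auto simp: fun_eq_iff)
  ultimately show ?thesis using S by metis
qed


lemma Cinf_pd: "Cinf_on U f \<Longrightarrow> Cinf_on U (pd i f)"
  unfolding Cinf_on_def using Ck_pd by blast

lemma Cinf_diff_at: "open U \<Longrightarrow> Cinf_on U f \<Longrightarrow> p \<in> U \<Longrightarrow> f differentiable (at p)"
  unfolding Cinf_on_def using Ck_diff_at by blast

lemma Cinf_Ck: "Cinf_on U f \<Longrightarrow> Ck k U f"
  unfolding Cinf_on_def by blast

lemma Cinf_cong: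
  fixes f g :: "real \<times> real \<Rightarrow> 'b::real_normed_vector"
  shows "open U \<Longrightarrow> Cinf_on U f \<Longrightarrow> (\<And>q. q \<in> U \<Longrightarrow> f q = g q) \<Longrightarrow> Cinf_on U g"
  unfolding Cinf_on_def using Ck_cong by blast

lemma Cinf_const: "Cinf_on U (\<lambda>q. c)"
  unfolding Cinf_on_def using Ck_const by blast

lemma Cinf_add:
  fixes f g :: "real \<times> real \<Rightarrow> 'b::real_normed_vector"
  shows "open U \<Longrightarrow> Cinf_on U f \<Longrightarrow> Cinf_on U g \<Longrightarrow> Cinf_on U (\<lambda>q. f q + g q)"
  unfolding Cinf_on_def using Ck_add by blast

lemma Cinf_bil:
  "open U \<Longrightarrow> bounded_bilinear B \<Longrightarrow> Cinf_on U f \<Longrightarrow> Cinf_on U g \<Longrightarrow> Cinf_on U (\<lambda>q. B (f q) (g q))"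
  unfolding Cinf_on_def using Ck_bil by blast

lemma Cinf_inverse:
  fixes f :: "real \<times> real \<Rightarrow> real"
  shows "open U \<Longrightarrow> (\<And>q. q \<in> U \<Longrightarrow> f q \<noteq> 0) \<Longrightarrow> Cinf_on U f \<Longrightarrow> Cinf_on U (\<lambda>q. inverse (f q))"
  unfolding Cinf_on_def using Ck_inverse by blast

lemma sum2: "(\<Sum>i<2. f i) = f 0 + f (1::nat)"
  by (simp add: numeral_2_eq_2)

lemma lor_alt: "lor x y = (- fst x, snd x) \<bullet> y"
  by (simp add: lor_def inner_prod_def)

lemma bounded_bilinear_lor: "bounded_bilinear (lor :: real \<times> (real^'n::finite) \<Rightarrow> _)"
proof -
  have "bounded_linear (\<lambda>x::real \<times> (real^'n). (- fst x, snd x))"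
    by (intro bounded_linear_Pair bounded_linear_minus bounded_linear_fst bounded_linear_snd)
  then have "bounded_bilinear (\<lambda>(x::real \<times> (real^'n)) (y::real \<times> (real^'n)). (- fst x, snd x) \<bullet> y)"
    using bounded_bilinear.comp1[OF bounded_bilinear_inner] by blast
  then show ?thesis unfolding lor_alt[abs_def] .
qed

lemma lor_sym: "lor x y = lor y x"
  by (simp add: lor_def inner_commute)

lemma lor_add_left: "lor (x + y) z = lor x z + lor y z"
  and lor_add_right: "lor z (x + y) = lor z x + lor z y"
  and lor_diff_left: "lor (x - y) z = lor x z - lor y z"
  and lor_diff_right: "lor z (x - y) = lor z x - lor z y"
  and lor_scale_left: "lor (c *\<^sub>R x) z = c * lor x z"
  and lor_scale_right: "lor z (c *\<^sub>R x) = c * lor z x"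
  and lor_zero_left: "lor 0 z = 0"
  and lor_zero_right: "lor z 0 = 0"
  and lor_minus_left: "lor (- x) z = - lor x z"
  and lor_minus_right: "lor z (- x) = - lor z x"
  by (simp_all add: lor_def algebra_simps inner_add_left inner_add_right inner_diff_left inner_diff_right)

lemmas lor_simps = lor_add_left lor_add_right lor_diff_left lor_diff_right lor_scale_left lor_scale_right
  lor_zero_left lor_zero_right lor_minus_left lor_minus_right


locale surf =
  fixes U :: "(real \<times> real) set" and X :: "real \<times> real \<Rightarrow> real \<times> (real^'n::finite)"
    and Z :: "real \<times> (real^'n)"
  assumes U: "open U" and XS: "Cinf_on U X" and detn: "\<And>q. q \<in> U \<Longrightarrow> detg X q < 0"
    and nul: "\<And>q. q \<in> U \<Longrightarrow> lightlike (Ztop X Z q)"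
begin

lemma S_pd: "Cinf_on U f \<Longrightarrow> Cinf_on U (pd i f)" by (rule Cinf_pd)
lemma S_const: "Cinf_on U (\<lambda>q. c)" by (rule Cinf_const)
lemma S_add: "Cinf_on U f \<Longrightarrow> Cinf_on U g \<Longrightarrow> Cinf_on U (\<lambda>q. f q + g q)"
  for f g :: "real \<times> real \<Rightarrow> 'b::real_normed_vector"
  by (rule Cinf_add[OF U])
lemma S_lor: "Cinf_on U f \<Longrightarrow> Cinf_on U g \<Longrightarrow> Cinf_on U (\<lambda>q. lor (f q) (g q))"
  for f g :: "real \<times> real \<Rightarrow> real \<times> (real^'m::finite)"
  by (rule Cinf_bil[OF U bounded_bilinear_lor])
lemma S_mult: "Cinf_on U f \<Longrightarrow> Cinf_on U g \<Longrightarrow> Cinf_on U (\<lambda>q. f q * g q)"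
  for f g :: "real \<times> real \<Rightarrow> real"
  by (rule Cinf_bil[OF U bounded_bilinear_mult])
lemma S_scaleR: "Cinf_on U f \<Longrightarrow> Cinf_on U g \<Longrightarrow> Cinf_on U (\<lambda>q. f q *\<^sub>R g q)"
  for f :: "real \<times> real \<Rightarrow> real" and g :: "real \<times> real \<Rightarrow> 'b::real_normed_vector"
  by (rule Cinf_bil[OF U bounded_bilinear_scaleR])
lemma S_minus: "Cinf_on U f \<Longrightarrow> Cinf_on U (\<lambda>q. - f q)"
  for f :: "real \<times> real \<Rightarrow> 'b::real_normed_vector"
  using S_scaleR[OF S_const[of "-1"], of f] by simp
lemma S_diff: "Cinf_on U f \<Longrightarrow> Cinf_on U g \<Longrightarrow> Cinf_on U (\<lambda>q. f q - g q)"
  for f g :: "real \<times> real \<Rightarrow> 'b::real_normed_vector"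
  using S_add[of f "\<lambda>q. - g q"] S_minus[of g] by simp
lemma S_inverse: "(\<And>q. q \<in> U \<Longrightarrow> f q \<noteq> 0) \<Longrightarrow> Cinf_on U f \<Longrightarrow> Cinf_on U (\<lambda>q. inverse (f q))"
  for f :: "real \<times> real \<Rightarrow> real"
  by (rule Cinf_inverse[OF U])
lemma S_divide: "(\<And>q. q \<in> U \<Longrightarrow> g q \<noteq> 0) \<Longrightarrow> Cinf_on U f \<Longrightarrow> Cinf_on U g \<Longrightarrow> Cinf_on U (\<lambda>q. f q / g q)"
  for f g :: "real \<times> real \<Rightarrow> real"
  using S_mult[of f "\<lambda>q. inverse (g q)"] S_inverse[of g] by (simp add: divide_inverse)

lemma D: "Cinf_on U f \<Longrightarrow> q \<in> U \<Longrightarrow> f differentiable (at q)"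
  by (rule Cinf_diff_at[OF U])

lemma pd_addS: "Cinf_on U f \<Longrightarrow> Cinf_on U g \<Longrightarrow> q \<in> U \<Longrightarrow> pd i (\<lambda>q. f q + g q) q = pd i f q + pd i g q"
  for f g :: "real \<times> real \<Rightarrow> 'b::real_normed_vector"
  by (rule pd_add[OF D D])
lemma pd_lorS: "Cinf_on U f \<Longrightarrow> Cinf_on U g \<Longrightarrow> q \<in> U \<Longrightarrow>
    pd i (\<lambda>q. lor (f q) (g q)) q = lor (f q) (pd i g q) + lor (pd i f q) (g q)"
  for f g :: "real \<times> real \<Rightarrow> real \<times> (real^'m::finite)"
  using pd_bil[OF bounded_bilinear_lor D D] by simp
lemma pd_multS: "Cinf_on U f \<Longrightarrow> Cinf_on U g \<Longrightarrow> q \<in> U \<Longrightarrow>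
    pd i (\<lambda>q. f q * g q) q = f q * pd i g q + pd i f q * g q"
  for f g :: "real \<times> real \<Rightarrow> real"
  using pd_bil[OF bounded_bilinear_mult D D] by simp
lemma pd_scaleRS: "Cinf_on U f \<Longrightarrow> Cinf_on U g \<Longrightarrow> q \<in> U \<Longrightarrow>
    pd i (\<lambda>q. f q *\<^sub>R g q) q = f q *\<^sub>R pd i g q + pd i f q *\<^sub>R g q"
  for f :: "real \<times> real \<Rightarrow> real" and g :: "real \<times> real \<Rightarrow> 'b::real_normed_vector"
  using pd_bil[OF bounded_bilinear_scaleR D D] by simp
lemma pd_constS: "pd i (\<lambda>q. c) q = 0" by (rule pd_const)
lemma pd_minusS: "Cinf_on U f \<Longrightarrow> q \<in> U \<Longrightarrow> pd i (\<lambda>q. - f q) q = - pd i f q"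
  for f :: "real \<times> real \<Rightarrow> 'b::real_normed_vector"
  using pd_scaleRS[OF S_const[of "-1"], of f q i] by (simp add: pd_const)
lemma pd_diffS: "Cinf_on U f \<Longrightarrow> Cinf_on U g \<Longrightarrow> q \<in> U \<Longrightarrow> pd i (\<lambda>q. f q - g q) q = pd i f q - pd i g q"
  for f g :: "real \<times> real \<Rightarrow> 'b::real_normed_vector"
  using pd_addS[of f "\<lambda>q. - g q" q i] S_minus[of g] pd_minusS[of g q i] by simp
lemma pd_congS: "q \<in> U \<Longrightarrow> (\<And>q. q \<in> U \<Longrightarrow> f q = g q) \<Longrightarrow> pd i f q = pd i g q"
  by (rule pd_cong[OF U])
lemma S_cong: "Cinf_on U f \<Longrightarrow> (\<And>q. q \<in> U \<Longrightarrow> f q = g q) \<Longrightarrow> Cinf_on U g"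
  for f g :: "real \<times> real \<Rightarrow> 'b::real_normed_vector"
  by (rule Cinf_cong[OF U])
lemma schwarzS: "Cinf_on U f \<Longrightarrow> q \<in> U \<Longrightarrow> pd i (pd j f) q = pd j (pd i f) q"
  for f :: "real \<times> real \<Rightarrow> 'b::euclidean_space"
  by (rule schwarz[OF U _ Cinf_Ck])

lemmas S_intros = S_pd S_const S_add S_lor S_mult S_scaleR S_minus S_diff XS

lemma S_gm: "Cinf_on U (gm X i j)"
  unfolding gm_def by (intro S_intros)

lemma S_detg: "Cinf_on U (detg X)"
  unfolding detg_def by (intro S_intros S_gm)

lemma det_ne: assumes "q \<in> U" shows "detg X q \<noteq> 0"
  using detn[OF assms] by simp

lemma S_ginv: "Cinf_on U (ginv X i j)"
proof -
  have "Cinf_on U (\<lambda>p. (if i = 0 \<and> j = 0 then gm X 1 1 p else if i = 1 \<and> j = 1 then gm X 0 0 p else - gm X i j p) / detg X p)"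
  proof (intro S_divide det_ne S_detg)
    show "Cinf_on U (\<lambda>q. if i = 0 \<and> j = 0 then gm X 1 1 q else if i = 1 \<and> j = 1 then gm X 0 0 q else - gm X i j q)"
    proof -
      have e: "(\<lambda>q. if i = 0 \<and> j = 0 then gm X 1 1 q else if i = 1 \<and> j = 1 then gm X 0 0 q else - gm X i j q)
        = (if i = 0 \<and> j = 0 then gm X 1 1 else if i = 1 \<and> j = 1 then gm X 0 0 else (\<lambda>q. - gm X i j q))"
        by auto
      show ?thesis unfolding e by (simp only: split: if_split) (simp add: S_gm S_minus)
    qed
  qed
  then show ?thesis unfolding ginv_def[abs_def] .
qed

lemma gm_sym: "gm X i j q = gm X j i q"
  by (simp add: gm_def lor_sym)

end

declare One_nat_def[simp del]

context surf begin

abbreviation "x i q \<equiv> pd i X q"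

definition tt :: "nat \<Rightarrow> real \<times> real \<Rightarrow> real" where "tt m q = lor (pd m X q) Z"
definition Tc :: "nat \<Rightarrow> real \<times> real \<Rightarrow> real" where "Tc i q = ginv X i 0 q * tt 0 q + ginv X i 1 q * tt 1 q"
definition TT :: "real \<times> real \<Rightarrow> real \<times> (real^'n)" where "TT q = tanp X Z q"

lemma tanp_expand: "tanp X v q = (ginv X 0 0 q * lor v (x 0 q) + ginv X 0 1 q * lor v (x 1 q)) *\<^sub>R x 0 q
   + (ginv X 1 0 q * lor v (x 0 q) + ginv X 1 1 q * lor v (x 1 q)) *\<^sub>R x 1 q"
  by (simp add: tanp_def sum2 scaleR_add_left)

lemma lor_x: "lor (x i q) (x j q) = gm X i j q" by (simp add: gm_def)

lemma proj_alg:
  fixes g00 g01 g11 v0 v1 :: real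
  assumes "g00 * g11 - g01 * g01 \<noteq> 0"
  shows "(g11 / (g00 * g11 - g01 * g01) * v0 + - g01 / (g00 * g11 - g01 * g01) * v1) * g00
       + (- g01 / (g00 * g11 - g01 * g01) * v0 + g00 / (g00 * g11 - g01 * g01) * v1) * g01 = v0"
    and "(g11 / (g00 * g11 - g01 * g01) * v0 + - g01 / (g00 * g11 - g01 * g01) * v1) * g01
       + (- g01 / (g00 * g11 - g01 * g01) * v0 + g00 / (g00 * g11 - g01 * g01) * v1) * g11 = v1"
proof -
  let ?d = "g00 * g11 - g01 * g01"
  show "(g11 / ?d * v0 + - g01 / ?d * v1) * g00 + (- g01 / ?d * v0 + g00 / ?d * v1) * g01 = v0"
    using assms by (simp add: divide_simps) algebra
  show "(g11 / ?d * v0 + - g01 / ?d * v1) * g01 + (- g01 / ?d * v0 + g00 / ?d * v1) * g11 = v1"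
    using assms by (simp add: divide_simps) algebra
qed

lemma gm10: "gm X 1 0 q = gm X 0 1 q" by (rule gm_sym)

lemma ginv_vals: "ginv X 0 0 q = gm X 1 1 q / detg X q" "ginv X 1 1 q = gm X 0 0 q / detg X q"
  "ginv X 0 1 q = - gm X 0 1 q / detg X q" "ginv X 1 0 q = - gm X 0 1 q / detg X q"
  "detg X q = gm X 0 0 q * gm X 1 1 q - gm X 0 1 q * gm X 0 1 q"
  by (simp_all add: ginv_def detg_def gm10)

lemma proj0: "q \<in> U \<Longrightarrow> lor (tanp X v q) (x 0 q) = lor v (x 0 q)"
  and proj1: "q \<in> U \<Longrightarrow> lor (tanp X v q) (x 1 q) = lor v (x 1 q)"
  using det_ne[of q] proj_alg[of "gm X 0 0 q" "gm X 1 1 q" "gm X 0 1 q" "lor v (x 0 q)" "lor v (x 1 q)"]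
  by (simp_all add: tanp_expand lor_simps lor_x ginv_vals gm10)

end

declare One_nat_def[simp del]

lemma rank1:
  fixes H00 H01 H11 T0 T1 t0 t1 :: real
  assumes r0: "T0*H00 + T1*H01 = 0" and r1: "T0*H01 + T1*H11 = 0" and o: "T0*t0 + T1*t1 = 0"
    and nz: "T0 \<noteq> 0 \<or> T1 \<noteq> 0"
  shows "H00 * (t0^2+t1^2)^2 = (H00*t0*t0 + 2*H01*t0*t1 + H11*t1*t1) * t0 * t0
    \<and> H01 * (t0^2+t1^2)^2 = (H00*t0*t0 + 2*H01*t0*t1 + H11*t1*t1) * t0 * t1
    \<and> H11 * (t0^2+t1^2)^2 = (H00*t0*t0 + 2*H01*t0*t1 + H11*t1*t1) * t1 * t1"
  using nz
proof (elim disjE)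
  assume a: "T0 \<noteq> 0" 
  have "H00 * (t0^2+t1^2)^2 = (H00*t0*t0 + 2*H01*t0*t1 + H11*t1*t1) * t0 * t0" using a r0 r1 o by algebra
  moreover have "H01 * (t0^2+t1^2)^2 = (H00*t0*t0 + 2*H01*t0*t1 + H11*t1*t1) * t0 * t1" using a r0 r1 o by algebra
  moreover have "H11 * (t0^2+t1^2)^2 = (H00*t0*t0 + 2*H01*t0*t1 + H11*t1*t1) * t1 * t1" using a r0 r1 o by algebra
  ultimately show ?thesis by blast
next
  assume a: "T1 \<noteq> 0" 
  have "H00 * (t0^2+t1^2)^2 = (H00*t0*t0 + 2*H01*t0*t1 + H11*t1*t1) * t0 * t0" using a r0 r1 o by algebra
  moreover have "H01 * (t0^2+t1^2)^2 = (H00*t0*t0 + 2*H01*t0*t1 + H11*t1*t1) * t0 * t1" using a r0 r1 o by algebra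
  moreover have "H11 * (t0^2+t1^2)^2 = (H00*t0*t0 + 2*H01*t0*t1 + H11*t1*t1) * t1 * t1" using a r0 r1 o by algebra
  ultimately show ?thesis by blast
qed

context surf begin

lemma x_cases: "m = 0 \<or> pd m X = pd 1 X"
  using pd_ne0 by blast

lemma S_x: "Cinf_on U (pd i X)" by (intro S_intros)

lemma S_tt: "Cinf_on U (tt m)"
  unfolding tt_def[abs_def] by (intro S_intros)

lemma S_Tc: "Cinf_on U (Tc i)"
  unfolding Tc_def[abs_def] by (intro S_intros S_ginv S_tt)

lemma T_expand: "TT q = Tc 0 q *\<^sub>R x 0 q + Tc 1 q *\<^sub>R x 1 q"
  by (simp add: TT_def tanp_expand Tc_def tt_def lor_sym)

lemma S_TT: "Cinf_on U TT"
proof -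
  have "Cinf_on U (\<lambda>q. Tc 0 q *\<^sub>R x 0 q + Tc 1 q *\<^sub>R x 1 q)" by (intro S_intros S_Tc)
  then show ?thesis by (rule S_cong) (simp add: T_expand)
qed

lemma TT_x0: "q \<in> U \<Longrightarrow> lor (TT q) (x 0 q) = tt 0 q"
  and TT_x1: "q \<in> U \<Longrightarrow> lor (TT q) (x 1 q) = tt 1 q"
  unfolding TT_def tt_def using proj0[of q Z] proj1[of q Z] lor_sym[of Z "x 0 q"] lor_sym[of Z "x 1 q"] by simp_all

lemma TT_x: assumes "q \<in> U" shows "lor (TT q) (x m q) = tt m q"
proof (cases "m = 0")
  case True then show ?thesis using TT_x0[OF assms] by simp
next
  case False
  then have "pd m X = pd 1 X" by (rule pd_ne0)
  then show ?thesis using TT_x1[OF assms] by (simp add: tt_def)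
qed

lemma Zp_x: "q \<in> U \<Longrightarrow> lor (Z - TT q) (x m q) = 0"
  using TT_x[of q m] by (simp add: lor_simps tt_def lor_sym)

lemma nulT: "q \<in> U \<Longrightarrow> lor (TT q) (TT q) = 0" and TT_nz: "q \<in> U \<Longrightarrow> TT q \<noteq> 0"
  using nul[of q] by (simp_all add: lightlike_def Ztop_def TT_def)

lemma lor_TT_left: "q \<in> U \<Longrightarrow> lor v (TT q) = Tc 0 q * lor v (x 0 q) + Tc 1 q * lor v (x 1 q)"
  by (simp add: T_expand lor_simps)

lemma Tt_orth: "q \<in> U \<Longrightarrow> Tc 0 q * tt 0 q + Tc 1 q * tt 1 q = 0"
  using nulT[of q] lor_TT_left[of q "TT q"] TT_x0[of q] TT_x1[of q] by (simp add: lor_sym)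

lemma Tc_nz: "q \<in> U \<Longrightarrow> Tc 0 q \<noteq> 0 \<or> Tc 1 q \<noteq> 0"
  using TT_nz[of q] T_expand[of q] by auto

lemma tt_nz: "q \<in> U \<Longrightarrow> tt 0 q \<noteq> 0 \<or> tt 1 q \<noteq> 0"
  using Tc_nz[of q] by (auto simp: Tc_def)

lemma tt_pos: "q \<in> U \<Longrightarrow> (tt 0 q)^2 + (tt 1 q)^2 > 0"
  using tt_nz[of q] by (auto simp: add_pos_nonneg add_nonneg_pos)

definition V :: "nat \<Rightarrow> real \<times> real \<Rightarrow> real \<times> (real^'n)" where "V k = pd k TT"
definition H :: "nat \<Rightarrow> nat \<Rightarrow> real \<times> real \<Rightarrow> real" where "H k m q = lor (V k q) (x m q)"

lemma S_V: "Cinf_on U (V k)" unfolding V_def by (intro S_intros S_TT)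
lemma S_H: "Cinf_on U (H k m)" unfolding H_def[abs_def] by (intro S_intros S_V)

lemma P4: assumes q: "q \<in> U" shows "Tc 0 q * H k 0 q + Tc 1 q * H k 1 q = 0"
proof -
  have "pd k (\<lambda>q. lor (TT q) (TT q)) q = pd k (\<lambda>q. 0) q"
    by (rule pd_congS[OF q]) (simp add: nulT)
  then have "lor (TT q) (V k q) + lor (V k q) (TT q) = 0"
    using pd_lorS[OF S_TT S_TT q, of k] by (simp add: pd_const V_def)
  then have "lor (V k q) (TT q) = 0" by (simp add: lor_sym)
  then show ?thesis using lor_TT_left[OF q, of "V k q"] by (simp add: H_def)
qed

lemma P5: assumes q: "q \<in> U" shows "H k m q = lor (Z - TT q) (pd k (pd m X) q)"
proof -
  have "pd k (\<lambda>q. lor (Z - TT q) (x m q)) q = pd k (\<lambda>q. 0) q"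
    by (rule pd_congS[OF q]) (simp add: Zp_x)
  moreover have "pd k (\<lambda>q. Z - TT q) q = - V k q"
    using pd_diffS[OF S_const S_TT q, of k Z] by (simp add: pd_const V_def)
  moreover have "Cinf_on U (\<lambda>q. Z - TT q)" by (intro S_intros S_TT)
  ultimately show ?thesis
    using pd_lorS[of "\<lambda>q. Z - TT q" "pd m X" q k] q S_x
    by (simp add: pd_const H_def lor_simps)
qed

lemma H_sym: "q \<in> U \<Longrightarrow> H k m q = H m k q"
  using P5 schwarzS[OF XS] by metis

definition ah :: "real \<times> real \<Rightarrow> real" where
  "ah q = (H 0 0 q * tt 0 q * tt 0 q + 2 * H 0 1 q * tt 0 q * tt 1 q + H 1 1 q * tt 1 q * tt 1 q)
          / ((tt 0 q)^2 + (tt 1 q)^2)^2"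

lemma S_ah: "Cinf_on U ah"
proof -
  have "Cinf_on U (\<lambda>q. (H 0 0 q * tt 0 q * tt 0 q + 2 * H 0 1 q * tt 0 q * tt 1 q + H 1 1 q * tt 1 q * tt 1 q)
          / (((tt 0 q)*(tt 0 q) + (tt 1 q)*(tt 1 q)) * ((tt 0 q)*(tt 0 q) + (tt 1 q)*(tt 1 q))))"
  proof (intro S_divide S_intros S_H S_tt)
    fix q assume "q \<in> U"
    then have "(tt 0 q)*(tt 0 q) + (tt 1 q)*(tt 1 q) > 0" using tt_pos by (simp add: power2_eq_square)
    then show "((tt 0 q)*(tt 0 q) + (tt 1 q)*(tt 1 q)) * ((tt 0 q)*(tt 0 q) + (tt 1 q)*(tt 1 q)) \<noteq> 0"
      by (smt (verit) mult_pos_pos)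
  qed
  then show ?thesis unfolding ah_def[abs_def] by (simp add: power2_eq_square)
qed

lemma P6: assumes q: "q \<in> U" and km: "k < 2" "m < 2"
  shows "H k m q = ah q * tt k q * tt m q"
proof -
  define A where "A = H 0 0 q * tt 0 q * tt 0 q + 2 * H 0 1 q * tt 0 q * tt 1 q + H 1 1 q * tt 1 q * tt 1 q"
  define s where "s = ((tt 0 q)^2 + (tt 1 q)^2)^2"
  have "(tt 0 q)^2 + (tt 1 q)^2 > 0" by (rule tt_pos[OF q])
  then have s: "s \<noteq> 0" unfolding s_def by (smt (verit) power_not_zero)
  have r1: "Tc 0 q * H 0 1 q + Tc 1 q * H 1 1 q = 0" using P4[OF q, of 1] H_sym[OF q, of 1 0] by simp
  note R = rank1[OF P4[OF q, of 0] r1 Tt_orth[OF q] Tc_nz[OF q]]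
  have e: "H k m q * s = A * tt k q * tt m q"
  proof -
    have "k = 0 \<or> k = 1" "m = 0 \<or> m = 1" using km by auto
    then show ?thesis using R H_sym[OF q, of 1 0] unfolding A_def s_def
      by (elim disjE) (simp_all add: algebra_simps)
  qed
  have "ah q = A / s" by (simp add: ah_def A_def s_def)
  then have "s * H k m q = s * (ah q * tt k q * tt m q)" using e s by (simp add: field_simps)
  then show ?thesis using s by simp
qed

end

declare One_nat_def[simp del]

lemma ginv_null_frame:
  fixes g00 g01 g11 T0 T1 W0 W1 :: real
  assumes "T0*T0*g00 + 2*T0*T1*g01 + T1*T1*g11 = 0"
    "W0*W0*g00 + 2*W0*W1*g01 + W1*W1*g11 = 0"
    "T0*W0*g00 + (T0*W1 + T1*W0)*g01 + T1*W1*g11 = -1"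
  shows "g11 = - 2*T0*W0 * (g00*g11 - g01*g01)"
    and "- g01 = - (T0*W1 + T1*W0) * (g00*g11 - g01*g01)"
    and "g00 = - 2*T1*W1 * (g00*g11 - g01*g01)"
  using assms by algebra+

context surf begin

lemma nondeg:
  assumes q: "q \<in> U" and o0: "lor (a *\<^sub>R x 0 q + b *\<^sub>R x 1 q) (x 0 q) = 0"
    and o1: "lor (a *\<^sub>R x 0 q + b *\<^sub>R x 1 q) (x 1 q) = 0"
  shows "a = 0 \<and> b = 0"
proof -
  have d: "gm X 0 0 q * gm X 1 1 q - gm X 0 1 q * gm X 0 1 q \<noteq> 0"
    using det_ne[OF q] by (simp add: ginv_vals)
  have e0: "a * gm X 0 0 q + b * gm X 0 1 q = 0" using o0 by (simp add: lor_simps lor_x gm10)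
  have e1: "a * gm X 0 1 q + b * gm X 1 1 q = 0" using o1 by (simp add: lor_simps lor_x gm10)
  have "a * (gm X 0 0 q * gm X 1 1 q - gm X 0 1 q * gm X 0 1 q) = 0"
    using e0 e1 by algebra
  moreover have "b * (gm X 0 0 q * gm X 1 1 q - gm X 0 1 q * gm X 0 1 q) = 0"
    using e0 e1 by algebra
  ultimately show ?thesis using d by simp
qed

lemma in_span2: "w \<in> span {x 0 q, x 1 q} \<Longrightarrow> \<exists>a b. w = a *\<^sub>R x 0 q + b *\<^sub>R x 1 q"
  by (auto simp: span_breakdown_eq span_singleton) (metis add.commute diff_add_cancel)

lemma tanp_id: assumes q: "q \<in> U" shows "tanp X (a *\<^sub>R x 0 q + b *\<^sub>R x 1 q) q = a *\<^sub>R x 0 q + b *\<^sub>R x 1 q"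
proof -
  let ?w = "a *\<^sub>R x 0 q + b *\<^sub>R x 1 q"
  obtain c0 c1 where c: "tanp X ?w q = c0 *\<^sub>R x 0 q + c1 *\<^sub>R x 1 q"
    using tanp_expand by blast
  have "lor ((c0 - a) *\<^sub>R x 0 q + (c1 - b) *\<^sub>R x 1 q) (x 0 q) = 0"
    using proj0[OF q, of ?w] c by (simp add: lor_simps algebra_simps)
  moreover have "lor ((c0 - a) *\<^sub>R x 0 q + (c1 - b) *\<^sub>R x 1 q) (x 1 q) = 0"
    using proj1[OF q, of ?w] c by (simp add: lor_simps algebra_simps)
  ultimately have "c0 - a = 0 \<and> c1 - b = 0" using nondeg[OF q] by blast
  then show ?thesis using c by simp
qed

definition sE where "sE q = (tt 0 q)^2 + (tt 1 q)^2"
definition EE where "EE q = tt 0 q *\<^sub>R x 0 q + tt 1 q *\<^sub>R x 1 q"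
definition W0 where "W0 q = (- 1 / sE q) *\<^sub>R (EE q - (lor (EE q) (EE q) / (2 * sE q)) *\<^sub>R TT q)"

lemma lor_x_TT: "q \<in> U \<Longrightarrow> lor (x m q) (TT q) = tt m q"
  using TT_x[of q m] by (simp add: lor_sym)

lemma EE_TT: "q \<in> U \<Longrightarrow> lor (EE q) (TT q) = sE q"
  by (simp add: EE_def sE_def lor_simps lor_x_TT power2_eq_square)

lemma W0_props: assumes q: "q \<in> U"
  shows "lor (W0 q) (W0 q) = 0" "lor (TT q) (W0 q) = -1" "W0 q \<in> span {x 0 q, x 1 q}"
proof -
  have s: "sE q \<noteq> 0" using tt_pos[OF q] unfolding sE_def by linarith
  have et: "lor (TT q) (EE q) = sE q" using EE_TT[OF q] by (simp add: lor_sym)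
  show "lor (W0 q) (W0 q) = 0"
    using s EE_TT[OF q] et nulT[OF q] by (simp add: W0_def lor_simps field_simps)
  show "lor (TT q) (W0 q) = -1"
    using s et nulT[OF q] by (simp add: W0_def lor_simps field_simps)
  have "EE q \<in> span {x 0 q, x 1 q}" unfolding EE_def
    by (intro span_add span_scale span_base) auto
  moreover have "TT q \<in> span {x 0 q, x 1 q}" unfolding T_expand
    by (intro span_add span_scale span_base) auto
  ultimately show "W0 q \<in> span {x 0 q, x 1 q}" unfolding W0_def
    by (intro span_diff span_scale)
qed

lemma W_unique: assumes q: "q \<in> U" and w: "w \<in> span {x 0 q, x 1 q}" "lor w w = 0" "lor (TT q) w = -1"
  shows "w = W0 q"
proof -
  obtain a b where ab: "w - W0 q = a *\<^sub>R x 0 q + b *\<^sub>R x 1 q"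
    using in_span2[of "w - W0 q" q] span_diff[OF w(1) W0_props(3)[OF q]] by blast
  have o: "a * tt 0 q + b * tt 1 q = 0"
  proof -
    have "lor (TT q) (w - W0 q) = 0" using w(3) W0_props(2)[OF q] by (simp add: lor_simps)
    then show ?thesis using ab TT_x[OF q] by (simp add: lor_simps)
  qed
  have par: "a * Tc 1 q = b * Tc 0 q"
    using tt_nz[OF q] o Tt_orth[OF q]
  proof (elim disjE)
    assume "tt 0 q \<noteq> 0" then show ?thesis using o Tt_orth[OF q] by algebra
  next
    assume "tt 1 q \<noteq> 0" then show ?thesis using o Tt_orth[OF q] by algebra
  qed
  obtain l where l: "w - W0 q = l *\<^sub>R TT q"
  proof (cases "Tc 0 q = 0")
    case True
    then have "Tc 1 q \<noteq> 0" using Tc_nz[OF q] by simp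
    then have "a = 0" using par True by simp
    then show ?thesis using that[of "b / Tc 1 q"] ab True \<open>Tc 1 q \<noteq> 0\<close> by (simp add: T_expand)
  next
    case False
    have "b = a * Tc 1 q / Tc 0 q" using par False by (simp add: field_simps)
    then show ?thesis using that[of "a / Tc 0 q"] ab False by (simp add: T_expand scaleR_add_right)
  qed
  have wT: "lor (W0 q) (TT q) = -1" using W0_props(2)[OF q] lor_sym[of "W0 q" "TT q"] by simp
  have "w = W0 q + l *\<^sub>R TT q" using l by (simp add: algebra_simps)
  then have "lor w w = lor (W0 q + l *\<^sub>R TT q) (W0 q + l *\<^sub>R TT q)" by simp
  also have "\<dots> = - 2 * l"
    using W0_props(1,2)[OF q] nulT[OF q] wT by (simp add: lor_simps)
  finally have "l = 0" using w(2) by simp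
  then show ?thesis using l by simp
qed

lemma Wfield_eq: assumes q: "q \<in> U" shows "Wfield X Z q = W0 q"
  unfolding Wfield_def Ztop_def TT_def[symmetric]
proof (rule the_equality)
  show "W0 q \<in> span {x 0 q, x 1 q} \<and> lightlike (W0 q) \<and> lor (TT q) (W0 q) = -1"
    using W0_props[OF q] by (auto simp: lightlike_def lor_simps)
  fix w assume a: "w \<in> span {x 0 q, x 1 q} \<and> lightlike w \<and> lor (TT q) w = - 1"
  then have "w \<in> span {x 0 q, x 1 q}" "lor w w = 0" "lor (TT q) w = -1" by (auto simp: lightlike_def)
  then show "w = W0 q" by (rule W_unique[OF q])
qed

abbreviation "Wc i q \<equiv> Wcoef X Z i q"

lemma W_expand: assumes q: "q \<in> U" shows "Wfield X Z q = Wc 0 q *\<^sub>R x 0 q + Wc 1 q *\<^sub>R x 1 q"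
proof -
  obtain a b where ab: "Wfield X Z q = a *\<^sub>R x 0 q + b *\<^sub>R x 1 q"
    using in_span2 W0_props(3)[OF q] Wfield_eq[OF q] by metis
  have "tanp X (Wfield X Z q) q = Wfield X Z q" using tanp_id[OF q] ab by simp
  moreover have "tanp X (Wfield X Z q) q = Wc 0 q *\<^sub>R x 0 q + Wc 1 q *\<^sub>R x 1 q"
    by (simp add: tanp_expand Wcoef_def sum2)
  ultimately show ?thesis by simp
qed

end

declare One_nat_def[simp del]

context surf begin

lemma W1: assumes q: "q \<in> U" shows "Wc 0 q * tt 0 q + Wc 1 q * tt 1 q = -1"
proof -
  have "lor (TT q) (Wfield X Z q) = -1" using W0_props(2)[OF q] Wfield_eq[OF q] by simp
  then show ?thesis using W_expand[OF q] TT_x[OF q] by (simp add: lor_simps)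
qed

lemma lor_xx: "lor (a *\<^sub>R x 0 q + b *\<^sub>R x 1 q) (c *\<^sub>R x 0 q + d *\<^sub>R x 1 q) =
   a * c * gm X 0 0 q + (a * d + b * c) * gm X 0 1 q + b * d * gm X 1 1 q"
  by (simp add: lor_simps lor_x gm10 algebra_simps)

lemma frame_rels: assumes q: "q \<in> U"
  shows "Tc 0 q * Tc 0 q * gm X 0 0 q + 2 * Tc 0 q * Tc 1 q * gm X 0 1 q + Tc 1 q * Tc 1 q * gm X 1 1 q = 0"
    "Wc 0 q * Wc 0 q * gm X 0 0 q + 2 * Wc 0 q * Wc 1 q * gm X 0 1 q + Wc 1 q * Wc 1 q * gm X 1 1 q = 0"
    "Tc 0 q * Wc 0 q * gm X 0 0 q + (Tc 0 q * Wc 1 q + Tc 1 q * Wc 0 q) * gm X 0 1 q + Tc 1 q * Wc 1 q * gm X 1 1 q = -1"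
proof -
  show "Tc 0 q * Tc 0 q * gm X 0 0 q + 2 * Tc 0 q * Tc 1 q * gm X 0 1 q + Tc 1 q * Tc 1 q * gm X 1 1 q = 0"
    using nulT[OF q] unfolding T_expand lor_xx by (simp add: algebra_simps)
  have "lor (Wfield X Z q) (Wfield X Z q) = 0" using W0_props(1)[OF q] Wfield_eq[OF q] by simp
  then show "Wc 0 q * Wc 0 q * gm X 0 0 q + 2 * Wc 0 q * Wc 1 q * gm X 0 1 q + Wc 1 q * Wc 1 q * gm X 1 1 q = 0"
    unfolding W_expand[OF q] lor_xx by (simp add: algebra_simps)
  have "lor (TT q) (Wfield X Z q) = -1" using W0_props(2)[OF q] Wfield_eq[OF q] by simp
  then show "Tc 0 q * Wc 0 q * gm X 0 0 q + (Tc 0 q * Wc 1 q + Tc 1 q * Wc 0 q) * gm X 0 1 q + Tc 1 q * Wc 1 q * gm X 1 1 q = -1"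
    unfolding W_expand[OF q] T_expand lor_xx by (simp add: algebra_simps)
qed

lemma W2: assumes q: "q \<in> U"
  shows "ginv X 0 0 q = - (2 * Tc 0 q * Wc 0 q)"
    "ginv X 0 1 q = - (Tc 0 q * Wc 1 q + Wc 0 q * Tc 1 q)"
    "ginv X 1 0 q = - (Tc 0 q * Wc 1 q + Wc 0 q * Tc 1 q)"
    "ginv X 1 1 q = - (2 * Tc 1 q * Wc 1 q)"
proof -
  note F = ginv_null_frame[OF frame_rels[OF q]]
  have d: "gm X 0 0 q * gm X 1 1 q - gm X 0 1 q * gm X 0 1 q \<noteq> 0"
    using det_ne[OF q] by (simp add: ginv_vals)
  show "ginv X 0 0 q = - (2 * Tc 0 q * Wc 0 q)" using F(1) d by (simp add: ginv_vals field_simps)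
  show "ginv X 0 1 q = - (Tc 0 q * Wc 1 q + Wc 0 q * Tc 1 q)" using F(2) d by (simp add: ginv_vals field_simps)
  show "ginv X 1 0 q = - (Tc 0 q * Wc 1 q + Wc 0 q * Tc 1 q)" using F(2) d by (simp add: ginv_vals field_simps)
  show "ginv X 1 1 q = - (2 * Tc 1 q * Wc 1 q)" using F(3) d by (simp add: ginv_vals field_simps)
qed

lemma sff_Zp: assumes q: "q \<in> U" shows "lor (sff X i j q) (Z - TT q) = H i j q"
proof -
  have "lor (tanp X (pd i (pd j X) q) q) (Z - TT q) = 0"
    unfolding tanp_expand using Zp_x[OF q] by (simp add: lor_simps lor_sym[of "x _ q"])
  moreover have "lor (sff X i j q) (Z - TT q) = lor (pd i (pd j X) q) (Z - TT q) - lor (tanp X (pd i (pd j X) q) q) (Z - TT q)"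
    by (simp add: sff_def norp_def lor_diff_left)
  ultimately show ?thesis
    using P5[OF q, of i j] lor_sym[of "pd i (pd j X) q" "Z - TT q"] by simp
qed

lemma acoef_eq: assumes q: "q \<in> U" shows "acoef X Z q = ah q"
proof -
  have Zp: "Zperp X Z q = Z - TT q" by (simp add: Zperp_def norp_def TT_def)
  have "acoef X Z q = Wc 0 q * Wc 0 q * H 0 0 q + Wc 0 q * Wc 1 q * H 0 1 q
       + Wc 1 q * Wc 0 q * H 1 0 q + Wc 1 q * Wc 1 q * H 1 1 q"
    unfolding acoef_def Zp by (simp add: sum2 lor_add_left lor_scale_left sff_Zp[OF q])
  also have "\<dots> = ah q * (Wc 0 q * tt 0 q + Wc 1 q * tt 1 q)^2"
    using P6[OF q] by (simp add: power2_eq_square algebra_simps)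
  also have "\<dots> = ah q" using W1[OF q] by simp
  finally show ?thesis .
qed

end

declare One_nat_def[simp del]

context surf begin

abbreviation "N i j q \<equiv> sff X i j q"

lemma gm_fun: "gm X j l = (\<lambda>p. lor (pd j X p) (pd l X p))" by (simp add: gm_def[abs_def])

lemma S_chr: "Cinf_on U (chr X k i j)"
  unfolding chr_def[abs_def] sum2 by (intro S_intros S_ginv S_gm)

lemma S_N: "Cinf_on U (sff X i j)"
  unfolding sff_def[abs_def] norp_def tanp_expand by (intro S_intros S_ginv)

lemma gm_sym_fun: "gm X i j = gm X j i" by (simp add: fun_eq_iff gm_sym)

lemma chr_sym: "chr X k i j q = chr X k j i q"
  by (simp add: chr_def gm_sym_fun[of i j] add.commute)

lemma x_gen: "lor v (x m q) = 0" if "lor v (x 0 q) = 0" "lor v (x 1 q) = 0"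
  using x_cases[of m] that by auto

lemma N_x: assumes q: "q \<in> U" shows "lor (N i j q) (x m q) = 0"
  by (rule x_gen) (simp_all add: sff_def norp_def lor_diff_left proj0[OF q] proj1[OF q])

lemma first_kind: assumes q: "q \<in> U"
  shows "lor (pd i (pd j X) q) (x l q) = 1/2 * (pd i (gm X j l) q + pd j (gm X i l) q - pd l (gm X i j) q)"
proof -
  have a: "pd a (gm X b c) q = lor (x b q) (pd a (pd c X) q) + lor (pd a (pd b X) q) (x c q)" for a b c
    unfolding gm_fun by (rule pd_lorS[OF S_x S_x q])
  show ?thesis using a[of i j l] a[of j i l] a[of l i j] schwarzS[OF XS q]
    by (simp add: lor_sym[of "x _ q"])
qed

lemma gauss_formula: assumes q: "q \<in> U"
  shows "pd i (pd j X) q = chr X 0 i j q *\<^sub>R x 0 q + chr X 1 i j q *\<^sub>R x 1 q + N i j q"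
proof -
  have c: "chr X k i j q = ginv X k 0 q * lor (pd i (pd j X) q) (x 0 q) + ginv X k 1 q * lor (pd i (pd j X) q) (x 1 q)" for k
    by (simp add: chr_def sum2 first_kind[OF q] algebra_simps)
  show ?thesis by (simp add: sff_def norp_def tanp_expand c)
qed

lemma lor_X2_x: assumes q: "q \<in> U"
  shows "lor (pd i (pd j X) q) (x m q) = chr X 0 i j q * gm X 0 m q + chr X 1 i j q * gm X 1 m q"
  by (subst gauss_formula[OF q]) (simp add: lor_simps N_x[OF q] lor_x)

lemma lor_N_X2: assumes q: "q \<in> U"
  shows "lor (N i j q) (pd l (pd m X) q) = lor (N i j q) (N l m q)"
  by (subst gauss_formula[OF q, of l m]) (simp add: lor_simps N_x[OF q])

lemma dN: assumes q: "q \<in> U"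
  shows "lor (pd l (sff X i j) q) (x m q) = - lor (N i j q) (pd l (pd m X) q)"
proof -
  have "pd l (\<lambda>q. lor (sff X i j q) (x m q)) q = pd l (\<lambda>q. 0) q"
    by (rule pd_congS[OF q]) (simp add: N_x)
  moreover have "pd l (\<lambda>q. lor (sff X i j q) (x m q)) q = lor (sff X i j q) (pd l (pd m X) q) + lor (pd l (sff X i j) q) (x m q)"
    by (rule pd_lorS[OF S_N S_x q])
  ultimately show ?thesis by (simp add: pd_const)
qed

lemma third: assumes q: "q \<in> U"
  shows "lor (pd l (pd i (pd j X)) q) (x m q) =
     chr X 0 i j q * (chr X 0 l 0 q * gm X 0 m q + chr X 1 l 0 q * gm X 1 m q)
   + chr X 1 i j q * (chr X 0 l 1 q * gm X 0 m q + chr X 1 l 1 q * gm X 1 m q)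
   + pd l (chr X 0 i j) q * gm X 0 m q + pd l (chr X 1 i j) q * gm X 1 m q
   - lor (N i j q) (N l m q)"
proof -
  define f0 where "f0 = (\<lambda>q. chr X 0 i j q *\<^sub>R x 0 q)"
  define f1 where "f1 = (\<lambda>q. chr X 1 i j q *\<^sub>R x 1 q)"
  have S0: "Cinf_on U f0" unfolding f0_def by (intro S_scaleR S_chr S_x)
  have S1: "Cinf_on U f1" unfolding f1_def by (intro S_scaleR S_chr S_x)
  have "pd l (pd i (pd j X)) q = pd l (\<lambda>q. (f0 q + f1 q) + sff X i j q) q"
    by (rule pd_congS[OF q]) (simp add: gauss_formula f0_def f1_def)
  also have "\<dots> = pd l (\<lambda>q. f0 q + f1 q) q + pd l (sff X i j) q"
    by (rule pd_addS[OF S_add[OF S0 S1] S_N q])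
  also have "pd l (\<lambda>q. f0 q + f1 q) q = pd l f0 q + pd l f1 q"
    by (rule pd_addS[OF S0 S1 q])
  also have "pd l f0 q = chr X 0 i j q *\<^sub>R pd l (pd 0 X) q + pd l (chr X 0 i j) q *\<^sub>R x 0 q"
    unfolding f0_def by (rule pd_scaleRS[OF S_chr S_x q])
  also have "pd l f1 q = chr X 1 i j q *\<^sub>R pd l (pd 1 X) q + pd l (chr X 1 i j) q *\<^sub>R x 1 q"
    unfolding f1_def by (rule pd_scaleRS[OF S_chr S_x q])
  finally have e: "pd l (pd i (pd j X)) q = chr X 0 i j q *\<^sub>R pd l (pd 0 X) q + pd l (chr X 0 i j) q *\<^sub>R x 0 q
     + (chr X 1 i j q *\<^sub>R pd l (pd 1 X) q + pd l (chr X 1 i j) q *\<^sub>R x 1 q) + pd l (sff X i j) q" .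
  have a0: "lor (pd l (pd 0 X) q) (x m q) = chr X 0 l 0 q * gm X 0 m q + chr X 1 l 0 q * gm X 1 m q"
    by (rule lor_X2_x[OF q])
  have a1: "lor (pd l (pd 1 X) q) (x m q) = chr X 0 l 1 q * gm X 0 m q + chr X 1 l 1 q * gm X 1 m q"
    by (rule lor_X2_x[OF q])
  have a2: "lor (pd l (sff X i j) q) (x m q) = - lor (N i j q) (N l m q)"
    using dN[OF q] lor_N_X2[OF q] by simp
  show ?thesis unfolding e lor_add_left lor_scale_left a0 a1 a2 lor_x by simp
qed

lemma gauss_eq: assumes q: "q \<in> U"
  shows "gauss_curv X q * detg X q = lor (N 1 1 q) (N 0 0 q) - lor (N 0 1 q) (N 1 0 q)"
proof -
  have s: "pd 0 (pd 1 (pd 1 X)) q = pd 1 (pd 0 (pd 1 X)) q"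
    by (rule schwarzS[OF S_x q])
  have e: "lor (pd 0 (pd 1 (pd 1 X)) q) (x 0 q) = lor (pd 1 (pd 0 (pd 1 X)) q) (x 0 q)" using s by simp
  note e' = e[unfolded third[OF q]]
  have d: "detg X q \<noteq> 0" by (rule det_ne[OF q])
  define S where "S = (\<Sum>l<2. (pd 0 (chr X l 1 1) q - pd 1 (chr X l 0 1) q
              + (\<Sum>k<2. chr X k 1 1 q * chr X l 0 k q - chr X k 0 1 q * chr X l 1 k q))
            * gm X l 0 q)"
  have "gauss_curv X q * detg X q = S" unfolding gauss_curv_def S_def using d by simp
  also have "S = lor (N 1 1 q) (N 0 0 q) - lor (N 0 1 q) (N 1 0 q)"
    unfolding S_def sum2 using e' by algebra
  finally show ?thesis .
qed

end

declare One_nat_def[simp del]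

lemma TaK_alg:
  fixes g00 g01 g11 T0 T1 t0 t1 a0 a1 K D :: real
  assumes "T0*D = g11*t0 - g01*t1" "T1*D = g00*t1 - g01*t0" "D = g00*g11 - g01*g01"
    "T0*t0 + T1*t1 = 0" "(a0*t1 - a1*t0)*t0 = T1*K*D" "(a0*t1 - a1*t0)*t1 = -T0*K*D"
    "D \<noteq> 0" "t0 \<noteq> 0 \<or> t1 \<noteq> 0"
  shows "T0*a0 + T1*a1 = K"
  using assms(8)
proof (elim disjE)
  assume "t0 \<noteq> 0" then show ?thesis using assms(1-7) by algebra
next
  assume "t1 \<noteq> 0" then show ?thesis using assms(1-7) by algebra
qed

context surf begin

definition nu :: "nat \<Rightarrow> real \<times> real \<Rightarrow> real \<times> (real^'n)" where
  "nu k q = V k q - (ah q * tt k q) *\<^sub>R TT q"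

lemma S_nu: "Cinf_on U (nu k)"
  unfolding nu_def[abs_def] by (intro S_intros S_V S_ah S_tt S_TT)

lemma nu_x: assumes q: "q \<in> U" and k: "k < 2" shows "lor (nu k q) (x m q) = 0"
proof (rule x_gen)
  show "lor (nu k q) (x 0 q) = 0"
    using P6[OF q k, of 0] TT_x[OF q, of 0] by (simp add: nu_def lor_simps H_def)
  show "lor (nu k q) (x 1 q) = 0"
    using P6[OF q k, of 1] TT_x[OF q, of 1] by (simp add: nu_def lor_simps H_def)
qed

lemma pd_tt: assumes q: "q \<in> U" shows "pd j (tt k) q = lor (pd j (pd k X) q) Z"
proof -
  have "pd j (tt k) q = pd j (\<lambda>q. lor (pd k X q) Z) q" by (simp add: tt_def[abs_def])
  also have "\<dots> = lor (pd k X q) (pd j (\<lambda>q. Z) q) + lor (pd j (pd k X) q) Z"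
    by (rule pd_lorS[OF S_x S_const q])
  finally show ?thesis by (simp add: pd_const lor_simps)
qed

lemma pd_nu: assumes q: "q \<in> U"
  shows "pd j (nu k) q = pd j (V k) q - ((ah q * pd j (tt k) q + pd j ah q * tt k q) *\<^sub>R TT q + (ah q * tt k q) *\<^sub>R V j q)"
proof -
  have m: "Cinf_on U (\<lambda>q. ah q * tt k q)" by (intro S_mult S_ah S_tt)
  have "pd j (nu k) q = pd j (V k) q - pd j (\<lambda>q. (ah q * tt k q) *\<^sub>R TT q) q"
    unfolding nu_def[abs_def] by (rule pd_diffS[OF S_V S_scaleR[OF m S_TT] q])
  also have "pd j (\<lambda>q. (ah q * tt k q) *\<^sub>R TT q) q = (ah q * tt k q) *\<^sub>R pd j TT q + pd j (\<lambda>q. ah q * tt k q) q *\<^sub>R TT q"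
    by (rule pd_scaleRS[OF m S_TT q])
  also have "pd j (\<lambda>q. ah q * tt k q) q = ah q * pd j (tt k) q + pd j ah q * tt k q"
    by (rule pd_multS[OF S_ah S_tt q])
  finally show ?thesis by (simp add: V_def algebra_simps)
qed

lemma codazzi0: assumes q: "q \<in> U" and k: "k < 2"
  shows "lor (pd j (V k) q) (x m q) = - lor (nu k q) (pd j (pd m X) q)
    + (ah q * pd j (tt k) q + pd j ah q * tt k q) * tt m q + ah q * tt k q * H j m q"
proof -
  have "pd j (\<lambda>q. lor (nu k q) (x m q)) q = pd j (\<lambda>q. 0) q"
    by (rule pd_congS[OF q]) (simp add: nu_x[OF _ k])
  moreover have "pd j (\<lambda>q. lor (nu k q) (x m q)) q = lor (nu k q) (pd j (pd m X) q) + lor (pd j (nu k) q) (x m q)"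
    by (rule pd_lorS[OF S_nu S_x q])
  ultimately have "lor (pd j (nu k) q) (x m q) = - lor (nu k q) (pd j (pd m X) q)" by (simp add: pd_const)
  then show ?thesis
    unfolding pd_nu[OF q] using TT_x[OF q, of m] by (simp add: lor_simps H_def algebra_simps)
qed

lemma TT_N: assumes q: "q \<in> U" shows "lor (TT q) (N j m q) = 0"
  using N_x[OF q, of j m 0] N_x[OF q, of j m 1]
  by (simp add: T_expand lor_simps lor_sym[of "x _ q"])

lemma nu_X2: assumes q: "q \<in> U" and k: "k < 2"
  shows "lor (nu k q) (pd j (pd m X) q) = Tc 0 q * lor (N k 0 q) (N j m q) + Tc 1 q * lor (N k 1 q) (N j m q)"
proof -
  have a: "lor (nu k q) (pd j (pd m X) q) = lor (nu k q) (N j m q)"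
    by (subst gauss_formula[OF q]) (simp add: lor_simps nu_x[OF q k])
  have b: "lor (nu k q) (N j m q) = lor (V k q) (N j m q)"
    using TT_N[OF q] by (simp add: nu_def lor_simps)
  have SS: "Cinf_on U (\<lambda>q. Tc 0 q *\<^sub>R x 0 q)" "Cinf_on U (\<lambda>q. Tc 1 q *\<^sub>R x 1 q)"
    by (intro S_scaleR S_Tc S_x)+
  have "V k q = pd k (\<lambda>q. Tc 0 q *\<^sub>R x 0 q + Tc 1 q *\<^sub>R x 1 q) q"
    unfolding V_def by (rule pd_congS[OF q]) (simp add: T_expand)
  also have "\<dots> = pd k (\<lambda>q. Tc 0 q *\<^sub>R x 0 q) q + pd k (\<lambda>q. Tc 1 q *\<^sub>R x 1 q) q"
    by (rule pd_addS[OF SS q])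
  also have "pd k (\<lambda>q. Tc 0 q *\<^sub>R x 0 q) q = Tc 0 q *\<^sub>R pd k (pd 0 X) q + pd k (Tc 0) q *\<^sub>R x 0 q"
    by (rule pd_scaleRS[OF S_Tc S_x q])
  also have "pd k (\<lambda>q. Tc 1 q *\<^sub>R x 1 q) q = Tc 1 q *\<^sub>R pd k (pd 1 X) q + pd k (Tc 1) q *\<^sub>R x 1 q"
    by (rule pd_scaleRS[OF S_Tc S_x q])
  finally have v: "V k q = Tc 0 q *\<^sub>R pd k (pd 0 X) q + pd k (Tc 0) q *\<^sub>R x 0 q + (Tc 1 q *\<^sub>R pd k (pd 1 X) q + pd k (Tc 1) q *\<^sub>R x 1 q)" .
  have n0: "lor (x i q) (N j m q) = 0" for i using N_x[OF q, of j m i] by (simp add: lor_sym)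
  have n1: "lor (pd k (pd i X) q) (N j m q) = lor (N k i q) (N j m q)" for i
    using lor_N_X2[OF q, of j m k i] by (simp add: lor_sym)
  show ?thesis using a b unfolding v by (simp add: lor_simps n0 n1)
qed

lemma N_sym: assumes q: "q \<in> U" shows "N 1 0 q = N 0 1 q"
  using schwarzS[OF XS q, of 1 0] by (simp add: sff_def)

lemma T_a_K: assumes q: "q \<in> U"
  shows "Tc 0 q * pd 0 ah q + Tc 1 q * pd 1 ah q = gauss_curv X q"
proof -
  have sV: "pd 0 (V 1) q = pd 1 (V 0) q" unfolding V_def by (rule schwarzS[OF S_TT q])
  have stt: "pd 0 (tt 1) q = pd 1 (tt 0) q" using pd_tt[OF q] schwarzS[OF XS q, of 0 1] by simp
  have cod: "(pd 0 ah q * tt 1 q - pd 1 ah q * tt 0 q) * tt m q =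
      lor (nu 1 q) (pd 0 (pd m X) q) - lor (nu 0 q) (pd 1 (pd m X) q)" if "m < 2" for m
  proof -
    have e: "lor (pd 0 (V 1) q) (x m q) = lor (pd 1 (V 0) q) (x m q)" using sV by simp
    have A: "lor (pd 0 (V 1) q) (x m q) = - lor (nu 1 q) (pd 0 (pd m X) q)
      + (ah q * pd 0 (tt 1) q + pd 0 ah q * tt 1 q) * tt m q + ah q * tt 1 q * H 0 m q"
      by (rule codazzi0[OF q]) simp
    have B: "lor (pd 1 (V 0) q) (x m q) = - lor (nu 0 q) (pd 1 (pd m X) q)
      + (ah q * pd 1 (tt 0) q + pd 1 ah q * tt 0 q) * tt m q + ah q * tt 0 q * H 1 m q"
      by (rule codazzi0[OF q]) simp
    show ?thesis using e A B P6[OF q, of 0 m] P6[OF q, of 1 m] that stt by (simp add: algebra_simps)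
  qed
  have G: "gauss_curv X q * detg X q = lor (N 1 1 q) (N 0 0 q) - lor (N 0 1 q) (N 1 0 q)"
    by (rule gauss_eq[OF q])
  have nx: "lor (nu k q) (pd j (pd m X) q) = Tc 0 q * lor (N k 0 q) (N j m q) + Tc 1 q * lor (N k 1 q) (N j m q)"
    if "k < 2" for k j m by (rule nu_X2[OF q that])
  have s1: "lor (N 0 1 q) (N 0 0 q) = lor (N 0 0 q) (N 0 1 q)" "lor (N 1 1 q) (N 0 0 q) = lor (N 0 0 q) (N 1 1 q)"
    "lor (N 1 1 q) (N 0 1 q) = lor (N 0 1 q) (N 1 1 q)" by (simp_all add: lor_sym)
  have r0: "lor (nu 1 q) (pd 0 (pd 0 X) q) - lor (nu 0 q) (pd 1 (pd 0 X) q) = Tc 1 q * (lor (N 1 1 q) (N 0 0 q) - lor (N 0 1 q) (N 1 0 q))"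
    using nx[of 1 0 0] nx[of 0 1 0] lor_sym[of "N 1 0 q" "N 0 0 q"] by (simp add: algebra_simps)
  have r1: "lor (nu 1 q) (pd 0 (pd 1 X) q) - lor (nu 0 q) (pd 1 (pd 1 X) q) = - Tc 0 q * (lor (N 1 1 q) (N 0 0 q) - lor (N 0 1 q) (N 1 0 q))"
    using nx[of 1 0 1] nx[of 0 1 1] lor_sym[of "N 1 1 q" "N 0 0 q"] lor_sym[of "N 1 1 q" "N 0 1 q"] N_sym[OF q]
    by (simp add: algebra_simps)
  have c0: "(pd 0 ah q * tt 1 q - pd 1 ah q * tt 0 q) * tt 0 q = Tc 1 q * gauss_curv X q * detg X q"
    using cod[of 0] r0 G by (simp add: mult.assoc)
  have c1: "(pd 0 ah q * tt 1 q - pd 1 ah q * tt 0 q) * tt 1 q = - Tc 0 q * gauss_curv X q * detg X q"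
    using cod[of 1] r1 G by (simp add: mult.assoc)
  have tc0: "Tc 0 q * detg X q = gm X 1 1 q * tt 0 q - gm X 0 1 q * tt 1 q"
    using det_ne[OF q] by (simp add: Tc_def ginv_vals(1-4) field_simps)
  have tc1: "Tc 1 q * detg X q = gm X 0 0 q * tt 1 q - gm X 0 1 q * tt 0 q"
    using det_ne[OF q] by (simp add: Tc_def ginv_vals(1-4) field_simps)
  show ?thesis
    by (rule TaK_alg[OF tc0 tc1 ginv_vals(5) Tt_orth[OF q] c0 c1 det_ne[OF q] tt_nz[OF q]])
qed

end

declare One_nat_def[simp del]

lemma final_alg:
  fixes T0 T1 W0 W1 a a0 a1 a00 a10 a11 t0 t1 c000 c001 c011 c100 c101 c111 :: real
  assumes "W0*t0 + W1*t1 = -1"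
  shows "- (2 * T0 * W0) * (a00 - (c000 * a0 + c100 * a1)) +
     - (T0 * W1 + W0 * T1) * (a10 - (c001 * a0 + c101 * a1)) +
     (- (T0 * W1 + W0 * T1) * (a10 - (c001 * a0 + c101 * a1)) +
      - (2 * T1 * W1) * (a11 - (c011 * a0 + c111 * a1))) =
     - 2 * (T0 * a0 + T1 * a1) * a -
     2 * (W0 * (T0 * a00 + (a * t0 * T0 - (T0 * c000 + T1 * c001)) * a0 +
           (T1 * a10 + (a * t0 * T1 - (T0 * c100 + T1 * c101)) * a1)) +
          W1 * (T0 * a10 + (a * t1 * T0 - (T0 * c001 + T1 * c011)) * a0 +
           (T1 * a11 + (a * t1 * T1 - (T0 * c101 + T1 * c111)) * a1)))"
  using assms by algebra

context surf begin

lemma V_expand: assumes q: "q \<in> U"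
  shows "V k q = Tc 0 q *\<^sub>R pd k (pd 0 X) q + pd k (Tc 0) q *\<^sub>R x 0 q + (Tc 1 q *\<^sub>R pd k (pd 1 X) q + pd k (Tc 1) q *\<^sub>R x 1 q)"
proof -
  have SS: "Cinf_on U (\<lambda>q. Tc 0 q *\<^sub>R x 0 q)" "Cinf_on U (\<lambda>q. Tc 1 q *\<^sub>R x 1 q)"
    by (intro S_scaleR S_Tc S_x)+
  have "V k q = pd k (\<lambda>q. Tc 0 q *\<^sub>R x 0 q + Tc 1 q *\<^sub>R x 1 q) q"
    unfolding V_def by (rule pd_congS[OF q]) (simp add: T_expand)
  also have "\<dots> = pd k (\<lambda>q. Tc 0 q *\<^sub>R x 0 q) q + pd k (\<lambda>q. Tc 1 q *\<^sub>R x 1 q) q"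
    by (rule pd_addS[OF SS q])
  also have "pd k (\<lambda>q. Tc 0 q *\<^sub>R x 0 q) q = Tc 0 q *\<^sub>R pd k (pd 0 X) q + pd k (Tc 0) q *\<^sub>R x 0 q"
    by (rule pd_scaleRS[OF S_Tc S_x q])
  also have "pd k (\<lambda>q. Tc 1 q *\<^sub>R x 1 q) q = Tc 1 q *\<^sub>R pd k (pd 1 X) q + pd k (Tc 1) q *\<^sub>R x 1 q"
    by (rule pd_scaleRS[OF S_Tc S_x q])
  finally show ?thesis .
qed

lemma tt_Tc: assumes q: "q \<in> U" shows "tt m q = Tc 0 q * gm X 0 m q + Tc 1 q * gm X 1 m q"
  using TT_x[OF q, of m] by (simp add: T_expand lor_simps lor_x)

lemma DT: assumes q: "q \<in> U" and j: "j < 2"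
  shows "pd j (Tc 0) q = ah q * tt j q * Tc 0 q - (Tc 0 q * chr X 0 j 0 q + Tc 1 q * chr X 0 j 1 q)"
    and "pd j (Tc 1) q = ah q * tt j q * Tc 1 q - (Tc 0 q * chr X 1 j 0 q + Tc 1 q * chr X 1 j 1 q)"
proof -
  define c0 where "c0 = pd j (Tc 0) q - (ah q * tt j q * Tc 0 q - (Tc 0 q * chr X 0 j 0 q + Tc 1 q * chr X 0 j 1 q))"
  define c1 where "c1 = pd j (Tc 1) q - (ah q * tt j q * Tc 1 q - (Tc 0 q * chr X 1 j 0 q + Tc 1 q * chr X 1 j 1 q))"
  have e: "lor (c0 *\<^sub>R x 0 q + c1 *\<^sub>R x 1 q) (x m q) = 0" for m
  proof -
    have h: "lor (V j q) (x m q) = ah q * tt j q * tt m q" using P6[OF q j, of m] x_cases[of m]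
      proof -
        have "lor (V j q) (x m q) = H j m q" by (simp add: H_def)
        moreover have "H j m q = ah q * tt j q * tt m q" if "m < 2" using P6[OF q j that] .
        moreover have "H j m q = H j 1 q" if "\<not> m < 2" using that pd_ne0[of m X] by (simp add: H_def)
        moreover have "tt m q = tt 1 q" if "\<not> m < 2" using that pd_ne0[of m X] by (simp add: tt_def)
        ultimately show ?thesis using P6[OF q j, of 1] by (cases "m < 2") auto
      qed
    have "lor (V j q) (x m q) = Tc 0 q * (chr X 0 j 0 q * gm X 0 m q + chr X 1 j 0 q * gm X 1 m q)
        + pd j (Tc 0) q * gm X 0 m q + Tc 1 q * (chr X 0 j 1 q * gm X 0 m q + chr X 1 j 1 q * gm X 1 m q)
        + pd j (Tc 1) q * gm X 1 m q"
      unfolding V_expand[OF q] by (simp add: lor_simps lor_X2_x[OF q] lor_x)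
    then show ?thesis using h tt_Tc[OF q, of m] unfolding c0_def c1_def
      by (simp add: lor_simps lor_x algebra_simps)
  qed
  have "c0 = 0 \<and> c1 = 0" using nondeg[OF q e e] .
  then show "pd j (Tc 0) q = ah q * tt j q * Tc 0 q - (Tc 0 q * chr X 0 j 0 q + Tc 1 q * chr X 0 j 1 q)"
    and "pd j (Tc 1) q = ah q * tt j q * Tc 1 q - (Tc 0 q * chr X 1 j 0 q + Tc 1 q * chr X 1 j 1 q)"
    by (simp_all add: c0_def c1_def)
qed


lemma main_loc: assumes p: "p \<in> U"
  shows "lap X (acoef X Z) p = - 2 * gauss_curv X p * acoef X Z p - 2 * Wderiv X Z (gauss_curv X) p"
proof -
  have A1: "pd k (acoef X Z) q = pd k ah q" if "q \<in> U" for k q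
    by (rule pd_congS[OF that]) (rule acoef_eq)
  have A2: "pd i (pd j (acoef X Z)) p = pd i (pd j ah) p" for i j
    by (rule pd_congS[OF p]) (rule A1)
  have lapeq: "lap X (acoef X Z) p = lap X ah p" unfolding lap_def using A1[OF p] A2 by simp
  define phi where "phi q = Tc 0 q * pd 0 ah q + Tc 1 q * pd 1 ah q" for q
  have Sa: "Cinf_on U (pd i ah)" for i by (intro S_pd S_ah)
  have dK: "pd j (gauss_curv X) p = pd j phi p" for j
    by (rule pd_congS[OF p]) (simp add: phi_def T_a_K)
  have dphi: "pd j phi p = Tc 0 p * pd j (pd 0 ah) p + pd j (Tc 0) p * pd 0 ah p
      + (Tc 1 p * pd j (pd 1 ah) p + pd j (Tc 1) p * pd 1 ah p)" for j
  proof -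
    have M: "Cinf_on U (\<lambda>q. Tc i q * pd i ah q)" for i by (intro S_mult S_Tc Sa)
    have "pd j phi p = pd j (\<lambda>q. Tc 0 q * pd 0 ah q) p + pd j (\<lambda>q. Tc 1 q * pd 1 ah q) p"
      unfolding phi_def[abs_def] by (rule pd_addS[OF M M p])
    also have "pd j (\<lambda>q. Tc 0 q * pd 0 ah q) p = Tc 0 p * pd j (pd 0 ah) p + pd j (Tc 0) p * pd 0 ah p"
      by (rule pd_multS[OF S_Tc Sa p])
    also have "pd j (\<lambda>q. Tc 1 q * pd 1 ah q) p = Tc 1 p * pd j (pd 1 ah) p + pd j (Tc 1) p * pd 1 ah p"
      by (rule pd_multS[OF S_Tc Sa p])
    finally show ?thesis .
  qed
  have sw: "pd 0 (pd 1 ah) p = pd 1 (pd 0 ah) p" by (rule schwarzS[OF S_ah p])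
  have K: "Tc 0 p * pd 0 ah p + Tc 1 p * pd 1 ah p = gauss_curv X p" by (rule T_a_K[OF p])
  have w1: "Wc 0 p * tt 0 p + Wc 1 p * tt 1 p = -1" by (rule W1[OF p])
  note D0 = DT[OF p, of 0] and D1 = DT[OF p, of 1]
  have cs: "chr X k 1 0 p = chr X k 0 1 p" for k by (rule chr_sym)
  have "lap X ah p = - 2 * gauss_curv X p * ah p - 2 * Wderiv X Z (gauss_curv X) p"
    unfolding lap_def Wderiv_def sum2 dK dphi W2[OF p] D0[simplified] D1[simplified] cs sw K[symmetric]
    by (rule final_alg[OF w1])
  then show ?thesis using lapeq acoef_eq[OF p] by simp
qed

end

theorem mainTheorem12:
  fixes U :: "(real \<times> real) set" and X :: "real \<times> real \<Rightarrow> 'n::finite mink" and Z :: "'n mink"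
  assumes "timelike_surface U X"
    and "lor Z Z = 1"
    and "canonical_null_direction U X Z"
  shows "(\<forall>p\<in>U. lap X (acoef X Z) p
                 = - 2 * gauss_curv X p * acoef X Z p - 2 * Wderiv X Z (gauss_curv X) p)
       \<and> ((\<forall>p\<in>U. gauss_curv X p = 0) \<longrightarrow> (\<forall>p\<in>U. lap X (acoef X Z) p = 0))"
  proof -
  interpret surf U X Z
    using assms(1,3) by unfold_locales (auto simp: timelike_surface_def canonical_null_direction_def)
  have M: "\<forall>p\<in>U. lap X (acoef X Z) p = - 2 * gauss_curv X p * acoef X Z p - 2 * Wderiv X Z (gauss_curv X) p"
    using main_loc by blast
  moreover have "\<forall>p\<in>U. lap X (acoef X Z) p = 0" if K0: "\<forall>p\<in>U. gauss_curv X p = 0"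
  proof
    fix p assume p: "p \<in> U"
    have "pd i (gauss_curv X) p = pd i (\<lambda>q. 0) p" for i
      by (rule pd_congS[OF p]) (simp add: K0)
    then have "Wderiv X Z (gauss_curv X) p = 0" by (simp add: Wderiv_def pd_const)
    then show "lap X (acoef X Z) p = 0" using M p K0 by simp
  qed
  ultimately show ?thesis by blast
qed


end
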